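(* Let $U=\mathbb R$ and let $f^l,f^r:\mathbb R\to\mathbb R$ be such that, for some $u_o^l,u_o^r\in\mathbb R$, $f^{l,r}$ restricted to $(-\infty,u_o^{l,r}]$ is a bijective decreasing map onto $\mathbb R_+=[0,\infty)$ and $f^{l,r}$ restricted to $[u_o^{l,r},\infty)$ is a bijective increasing map onto $\mathbb R_+$. Let $\mathcal G_{AP}$ be the set of pairs $(u^l,u^r)\in\mathbb R^2$ with $f^l(u^l)=f^r(u^r)$ and $\operatorname{sign}(u^l-u_o^l)=\operatorname{sign}(u^r-u_o^r)$. Then $\mathcal G_{AP}$ is complete.
   Context: Completeness: $u_-$ connects to $u^l$ from the left if there is a Kruzhkov entropy solution $w$ of $w_t+f^l(w)_x=0$ on $(0,\infty)\times\mathbb R$ with initial data $u_-$ ($x<0$), $u^l$ ($x>0$) and $w=u^l$ a.e. on $\{x>0\}$; $u^r$ connects to $u_+$ from the right if there is a Kruzhkov entropy solution $w$ of $w_t+f^r(w)_x=0$ with data $u^r$ ($x<0$), $u_+$ ($x>0$) and $w=u^r$ a.e. on $\{x<0\}$. A set $\mathcal G$ of pairs is complete if for every $(u_-,u_+)\in\mathbb R^2$ there is $(u^l,u^r)\in\mathcal G$ such that $u_-$ connects to $u^l$ from the left and $u^r$ connects to $u_+$ from the right. *)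

theory Defs
  imports "HOL-Analysis.Analysis"
begin

text \<open>Nonnegative C^1 test functions with compact support on the (t,x)-plane.
  The pair p = (t,x); phit, phix are the partial derivatives in t and x.\<close>
definition test_fun ::
  "(real \<times> real \<Rightarrow> real) \<Rightarrow> (real \<times> real \<Rightarrow> real) \<Rightarrow> (real \<times> real \<Rightarrow> real) \<Rightarrow> bool" where
  "test_fun phi phit phix \<longleftrightarrow>
     (\<forall>p. phi p \<ge> 0) \<and>
     (\<exists>K. compact K \<and> (\<forall>p. p \<notin> K \<longrightarrow> phi p = 0)) \<and>
     (\<forall>p. (phi has_derivative (\<lambda>(s, y). s * phit p + y * phix p)) (at p)) \<and>
     continuous_on UNIV phit \<and> continuous_on UNIV phix"

text \<open>Kruzhkov entropy solution w(t,x) of w_t + f(w)_x = 0 on (0,\<infinity>) \<times> R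
  with initial data w0.\<close>
definition kruzhkov_solution ::
  "(real \<Rightarrow> real) \<Rightarrow> (real \<Rightarrow> real) \<Rightarrow> (real \<times> real \<Rightarrow> real) \<Rightarrow> bool" where
  "kruzhkov_solution f w0 w \<longleftrightarrow>
     w \<in> borel_measurable lborel \<and>
     (\<exists>M. \<forall>t x. t > 0 \<longrightarrow> \<bar>w (t, x)\<bar> \<le> M) \<and>
     (\<forall>k phi phit phix. test_fun phi phit phix \<longrightarrow>
        (LINT p : {0<..} \<times> UNIV | lborel.
            \<bar>w p - k\<bar> * phit p + sgn (w p - k) * (f (w p) - f k) * phix p)
        + (LINT x | lborel. \<bar>w0 x - k\<bar> * phi (0, x)) \<ge> 0)"

definition connects_left :: "(real \<Rightarrow> real) \<Rightarrow> real \<Rightarrow> real \<Rightarrow> bool" where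
  "connects_left fl um ul \<longleftrightarrow>
     (\<exists>w. kruzhkov_solution fl (\<lambda>x. if x < 0 then um else ul) w \<and>
          (AE p in lborel. fst p > 0 \<longrightarrow> snd p > 0 \<longrightarrow> w p = ul))"

definition connects_right :: "(real \<Rightarrow> real) \<Rightarrow> real \<Rightarrow> real \<Rightarrow> bool" where
  "connects_right fr ur up \<longleftrightarrow>
     (\<exists>w. kruzhkov_solution fr (\<lambda>x. if x < 0 then ur else up) w \<and>
          (AE p in lborel. fst p > 0 \<longrightarrow> snd p < 0 \<longrightarrow> w p = ur))"

definition complete_germ ::
  "(real \<Rightarrow> real) \<Rightarrow> (real \<Rightarrow> real) \<Rightarrow> (real \<times> real) set \<Rightarrow> bool" where
  "complete_germ fl fr G \<longleftrightarrow>
     (\<forall>um up. \<exists>(ul, ur) \<in> G. connects_left fl um ul \<and> connects_right fr ur up)"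

end

theory Submission
  imports Defs "HOL-Probability.Probability"
begin

definition bsupp :: "('a::euclidean_space \<Rightarrow> real) \<Rightarrow> bool" where
  "bsupp g \<longleftrightarrow> g \<in> borel_measurable borel \<and> (\<exists>K. compact K \<and> (\<forall>p. p \<notin> K \<longrightarrow> g p = 0)) \<and> (\<exists>C. \<forall>p. \<bar>g p\<bar> \<le> C)"

lemma bsupp_integrable:
  assumes "bsupp g" shows "integrable lborel g"
proof -
  from assms obtain K C where g: "g \<in> borel_measurable borel" "compact K" "\<And>p. p \<notin> K \<Longrightarrow> g p = 0" "\<And>p. \<bar>g p\<bar> \<le> C"
    unfolding bsupp_def by blast
  have K: "K \<in> sets lborel" using g(2) by (simp add: compact_imp_closed borel_closed)
  have I: "integrable lborel (\<lambda>p. C * indicator K p :: real)"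
    using emeasure_compact_finite[OF g(2)] K by (intro integrable_mult_right integrable_real_indicator) auto
  show ?thesis
  proof (rule Bochner_Integration.integrable_bound[OF I])
    show "g \<in> borel_measurable lborel" using g(1) by simp
    show "AE x in lborel. norm (g x) \<le> norm (C * indicator K x)"
    proof (rule AE_I2)
      fix x show "norm (g x) \<le> norm (C * indicator K x)"
      proof (cases "x \<in> K")
        case True then show ?thesis using g(4)[of x] by (simp add: indicator_def)
      next
        case False then show ?thesis using g(3)[of x] by simp
      qed
    qed
  qed
qed

lemma bsupp_mult:
  assumes "bsupp g" "h \<in> borel_measurable borel" "\<And>p. \<bar>h p\<bar> \<le> D"
  shows "bsupp (\<lambda>p. h p * g p)"
proof -
  from assms obtain K C where g: "g \<in> borel_measurable borel" "compact K" "\<And>p. p \<notin> K \<Longrightarrow> g p = 0" "\<And>p. \<bar>g p\<bar> \<le> C"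
    unfolding bsupp_def by blast
  have "\<bar>h p * g p\<bar> \<le> D * C" for p
    unfolding abs_mult by (intro mult_mono) (use assms(3) g(4) in \<open>auto intro: order_trans[OF abs_ge_zero]\<close>)
  then show ?thesis using g assms(2) unfolding bsupp_def by auto
qed

lemma bsupp_add:
  assumes "bsupp g" "bsupp h" shows "bsupp (\<lambda>p. g p + h p)"
proof -
  from assms obtain K C where g: "g \<in> borel_measurable borel" "compact K" "\<And>p. p \<notin> K \<Longrightarrow> g p = 0" "\<And>p. \<bar>g p\<bar> \<le> C"
    unfolding bsupp_def by blast
  from assms obtain L D where h: "h \<in> borel_measurable borel" "compact L" "\<And>p. p \<notin> L \<Longrightarrow> h p = 0" "\<And>p. \<bar>h p\<bar> \<le> D"
    unfolding bsupp_def by blast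
  have "\<bar>g p + h p\<bar> \<le> C + D" for p using g(4)[of p] h(4)[of p] by linarith
  moreover have "compact (K \<union> L)" using g h by auto
  ultimately show ?thesis using g h unfolding bsupp_def by (intro conjI exI[of _ "K \<union> L"] exI[of _ "C+D"]) auto
qed

lemma bsupp_cmult: "bsupp g \<Longrightarrow> bsupp (\<lambda>p. c * g p)"
  by (rule bsupp_mult) auto

lemma bsupp_cont:
  assumes "continuous_on UNIV g" "compact K" "\<And>p. p \<notin> K \<Longrightarrow> g p = 0"
  shows "bsupp g"
proof -
  have "g \<in> borel_measurable borel" using assms(1) by (rule borel_measurable_continuous_onI)
  moreover have "bounded (g ` K)" using assms(1,2) by (intro compact_imp_bounded compact_continuous_image) (auto intro: continuous_on_subset)
  then obtain C where "\<And>p. p \<in> K \<Longrightarrow> \<bar>g p\<bar> \<le> C" unfolding bounded_iff by auto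
  then have "\<bar>g p\<bar> \<le> max C 0" for p using assms(3)[of p] by (cases "p \<in> K") (auto simp: le_max_iff_disj)
  ultimately show ?thesis using assms unfolding bsupp_def by blast
qed

locale testf =
  fixes phi phit phix :: "real \<times> real \<Rightarrow> real"
  assumes tf: "test_fun phi phit phix"
begin

lemma nonneg: "phi p \<ge> 0" using tf unfolding test_fun_def by (cases p) auto

lemma deriv: "(phi has_derivative (\<lambda>(s, y). s * phit p + y * phix p)) (at p)"
  using tf unfolding test_fun_def by (cases p) auto

lemma cont_t: "continuous_on UNIV phit" and cont_x: "continuous_on UNIV phix"
  using tf unfolding test_fun_def by auto

lemma cont: "continuous_on UNIV phi"
  using deriv by (meson continuous_at_imp_continuous_on has_derivative_continuous)

lemma tfsupp: "\<exists>K. compact K \<and> (\<forall>p. p \<notin> K \<longrightarrow> phi p = 0 \<and> phit p = 0 \<and> phix p = 0)"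
proof -
  obtain K where K: "compact K" "\<And>p. p \<notin> K \<Longrightarrow> phi p = 0" using tf unfolding test_fun_def by auto
  have z: "phit p = 0 \<and> phix p = 0" if "p \<notin> K" for p
  proof -
    have "open (- K)" using K(1) by (simp add: compact_imp_closed open_Compl)
    have "((\<lambda>_. 0::real) has_derivative (\<lambda>_. 0)) (at p)" by simp
    then have "(phi has_derivative (\<lambda>_. 0)) (at p)"
      by (rule has_derivative_transform_within_open[OF _ \<open>open (-K)\<close>]) (use that K in auto)
    from has_derivative_unique[OF deriv this]
    have e: "(\<lambda>(s, y). s * phit p + y * phix p) = (\<lambda>_. 0)" .
    from fun_cong[OF e, of "(1,0)"] fun_cong[OF e, of "(0,1)"] show ?thesis by simp
  qed
  show ?thesis using K z by blast
qed

lemma bsupp_phi: "bsupp phi" and bsupp_t: "bsupp phit" and bsupp_x: "bsupp phix"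
proof -
  obtain K where K: "compact K" "\<forall>p. p \<notin> K \<longrightarrow> phi p = 0 \<and> phit p = 0 \<and> phix p = 0"
    using tfsupp by blast
  show "bsupp phi" by (rule bsupp_cont[OF cont K(1)]) (use K(2) in blast)
  show "bsupp phit" by (rule bsupp_cont[OF cont_t K(1)]) (use K(2) in blast)
  show "bsupp phix" by (rule bsupp_cont[OF cont_x K(1)]) (use K(2) in blast)
qed

lemma deriv_t: "((\<lambda>t. phi (t, x)) has_real_derivative phit (t, x)) (at t)"
proof -
  have "((\<lambda>t. (t, x)) has_derivative (\<lambda>s. (s, 0))) (at t)"
    by (auto intro!: derivative_eq_intros)
  from has_derivative_compose[OF this deriv[of "(t,x)"]]
  show ?thesis unfolding has_field_derivative_def
    by (rule has_derivative_eq_rhs) (auto simp: fun_eq_iff o_def mult.commute)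
qed

lemma deriv_x: "((\<lambda>x. phi (t, x)) has_real_derivative phix (t, x)) (at x)"
proof -
  have "((\<lambda>x. (t, x)) has_derivative (\<lambda>s. (0, s))) (at x)"
    by (auto intro!: derivative_eq_intros)
  from has_derivative_compose[OF this deriv[of "(t,x)"]]
  show ?thesis unfolding has_field_derivative_def
    by (rule has_derivative_eq_rhs) (auto simp: fun_eq_iff o_def mult.commute)
qed

lemma deriv_line: "((\<lambda>t. phi (t, y + s * t)) has_real_derivative (phit (t, y + s*t) + s * phix (t, y + s*t))) (at t)"
proof -
  have "((\<lambda>t. (t, y + s * t)) has_derivative (\<lambda>h. (h, s * h))) (at t)"
    by (auto intro!: derivative_eq_intros)
  from has_derivative_compose[OF this deriv[of "(t,y + s*t)"]]
  show ?thesis unfolding has_field_derivative_def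
    by (rule has_derivative_eq_rhs) (auto simp: fun_eq_iff o_def algebra_simps)
qed

end

lemma ftc_ray:
  fixes G g :: "real \<Rightarrow> real"
  assumes D: "\<And>x. (G has_real_derivative g x) (at x)" and gc: "continuous_on UNIV g"
    and G0: "\<And>x. \<bar>x\<bar> \<ge> R \<Longrightarrow> G x = 0" and g0: "\<And>x. \<bar>x\<bar> \<ge> R \<Longrightarrow> g x = 0"
  shows "(\<integral>x. indicator {c..} x * g x \<partial>lborel) = - G c"
proof -
  define b where "b = \<bar>c\<bar> + \<bar>R\<bar>"
  have cb: "c \<le> b" unfolding b_def by auto
  have "integral\<^sup>L lborel (\<lambda>x. indicator {c .. b} x *\<^sub>R g x) = G b - G c"
  proof (rule integral_FTC_atLeastAtMost[OF cb])
    fix x show "(G has_vector_derivative g x) (at x within {c..b})"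
      using D[of x] has_real_derivative_iff_has_vector_derivative has_vector_derivative_at_within by blast
  next
    show "continuous_on {c..b} g" using gc by (rule continuous_on_subset) simp
  qed
  moreover have "G b = 0" using G0[of b] unfolding b_def by linarith
  moreover have "(\<lambda>x. indicator {c..} x * g x) = (\<lambda>x. indicator {c .. b} x *\<^sub>R g x)"
  proof (rule ext)
    fix x show "indicator {c..} x * g x = indicator {c .. b} x *\<^sub>R g x"
    proof (cases "x \<le> b")
      case False then have "\<bar>x\<bar> \<ge> R" unfolding b_def by linarith
      then have "g x = 0" using g0[of x] by simp
      then show ?thesis by simp
    qed (simp add: indicator_def)
  qed
  ultimately show ?thesis by simp
qed

lemma ftc_ray':
  fixes G g :: "real \<Rightarrow> real"
  assumes D: "\<And>x. (G has_real_derivative g x) (at x)" and gc: "continuous_on UNIV g"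
    and G0: "\<And>x. \<bar>x\<bar> \<ge> R \<Longrightarrow> G x = 0" and g0: "\<And>x. \<bar>x\<bar> \<ge> R \<Longrightarrow> g x = 0"
  shows "(\<integral>x. indicator {c<..} x * g x \<partial>lborel) = - G c"
proof -
  have "(\<integral>x. indicator {c<..} x * g x \<partial>lborel) = (\<integral>x. indicator {c..} x * g x \<partial>lborel)"
  proof (rule integral_cong_AE)
    show "AE x in lborel. indicator {c<..} x * g x = indicator {c..} x * g x"
      by (rule AE_I'[of "{c}"]) (auto simp: indicator_def)
    have gm: "g \<in> borel_measurable borel" using gc by (rule borel_measurable_continuous_onI)
    show "(\<lambda>x. indicator {c<..} x * g x) \<in> borel_measurable lborel" using gm by simp
    show "(\<lambda>x. indicator {c..} x * g x) \<in> borel_measurable lborel" using gm by simp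
  qed
  then show ?thesis using ftc_ray[OF assms] by simp
qed

lemma ftc_line:
  fixes G g :: "real \<Rightarrow> real"
  assumes D: "\<And>x. (G has_real_derivative g x) (at x)" and gc: "continuous_on UNIV g"
    and G0: "\<And>x. \<bar>x\<bar> \<ge> R \<Longrightarrow> G x = 0" and g0: "\<And>x. \<bar>x\<bar> \<ge> R \<Longrightarrow> g x = 0"
  shows "(\<integral>x. g x \<partial>lborel) = 0"
proof -
  have "(\<lambda>x. indicator {- \<bar>R\<bar> - 1..} x * g x) = g"
  proof (rule ext)
    fix x show "indicator {- \<bar>R\<bar> - 1..} x * g x = g x"
    proof (cases "x \<ge> - \<bar>R\<bar> - 1")
      case False then have "\<bar>x\<bar> \<ge> R" by linarith
      then show ?thesis using g0[of x] by simp
    qed (simp add: indicator_def)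
  qed
  moreover have "G (- \<bar>R\<bar> - 1) = 0" using G0[of "- \<bar>R\<bar> - 1"] by linarith
  ultimately show ?thesis using ftc_ray[OF assms, where c="- \<bar>R\<bar> - 1"] by simp
qed

definition PI :: "(real \<times> real \<Rightarrow> real) \<Rightarrow> real" where
  "PI h = (LINT p : {0<..} \<times> UNIV | lborel. h p)"

lemma bsupp_ind: "A \<in> sets borel \<Longrightarrow> bsupp h \<Longrightarrow> bsupp (\<lambda>p. indicator A p * h p)"
  by (rule bsupp_mult) (auto simp: indicator_def)

lemma half_borel: "{0<..} \<times> UNIV \<in> sets (borel :: (real \<times> real) measure)"
  by (rule borel_open, rule open_Times, simp, simp)

lemma bsupp_PI: "bsupp (h :: real \<times> real \<Rightarrow> real) \<Longrightarrow> integrable lborel (\<lambda>p. indicator ({0<..} \<times> UNIV) p * h p)"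
  using bsupp_integrable bsupp_ind[OF half_borel] by blast

lemma PI_fst:
  assumes "bsupp h"
  shows "PI h = (\<integral>t. indicator {0<..} t * (\<integral>x. h (t,x) \<partial>lborel) \<partial>lborel)"
proof -
  let ?H = "\<lambda>p. indicator ({0<..} \<times> UNIV) p * h p"
  have "integrable lborel ?H" by (rule bsupp_PI[OF assms])
  then have I: "integrable (lborel \<Otimes>\<^sub>M lborel) ?H" by (simp add: lborel_prod)
  have "PI h = integral\<^sup>L (lborel \<Otimes>\<^sub>M lborel) ?H"
    unfolding PI_def set_lebesgue_integral_def by (simp add: lborel_prod)
  also have "\<dots> = (\<integral>t. (\<integral>x. ?H (t,x) \<partial>lborel) \<partial>lborel)"
    by (rule lborel_pair.integral_fst'[OF I, symmetric])
  also have "\<dots> = (\<integral>t. indicator {0<..} t * (\<integral>x. h (t,x) \<partial>lborel) \<partial>lborel)"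
    by (auto simp: indicator_times split: split_indicator)
  finally show ?thesis .
qed

lemma PI_snd:
  assumes "bsupp h"
  shows "PI h = (\<integral>x. (\<integral>t. indicator {0<..} t * h (t,x) \<partial>lborel) \<partial>lborel)"
proof -
  let ?H = "\<lambda>p. indicator ({0<..} \<times> UNIV) p * h p"
  have "integrable lborel ?H" by (rule bsupp_PI[OF assms])
  moreover have e2: "(\<lambda>(t,x). ?H (t,x)) = ?H" by auto
  ultimately have I: "integrable (lborel \<Otimes>\<^sub>M lborel) (\<lambda>(t,x). ?H (t,x))" by (simp add: lborel_prod)
  have "PI h = integral\<^sup>L (lborel \<Otimes>\<^sub>M lborel) (\<lambda>(t,x). ?H (t,x))"
    unfolding e2 PI_def set_lebesgue_integral_def by (simp add: lborel_prod)
  also have "\<dots> = (\<integral>x. (\<integral>t. ?H (t,x) \<partial>lborel) \<partial>lborel)"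
    by (rule lborel_pair.integral_snd[OF I, symmetric])
  also have "\<dots> = (\<integral>x. (\<integral>t. indicator {0<..} t * h (t,x) \<partial>lborel) \<partial>lborel)"
    by (auto simp: indicator_times split: split_indicator)
  finally show ?thesis .
qed

lemma PI_add: assumes "bsupp g" "bsupp h" shows "PI (\<lambda>p. g p + h p) = PI g + PI h"
proof -
  have e: "(\<lambda>p. indicator ({0<..} \<times> UNIV) p * (g p + h p)) = (\<lambda>p. indicator ({0<..} \<times> UNIV) p * g p + indicator ({0<..} \<times> UNIV) p * h p)"
    by (simp add: fun_eq_iff distrib_left)
  show ?thesis unfolding PI_def set_lebesgue_integral_def real_scaleR_def e
    by (rule Bochner_Integration.integral_add[OF bsupp_PI[OF assms(1)] bsupp_PI[OF assms(2)]])
qed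

lemma PI_cmult: "PI (\<lambda>p. c * g p) = c * PI g"
proof -
  have e: "(\<lambda>p. indicator ({0<..} \<times> UNIV) p * (c * g p)) = (\<lambda>p. c * (indicator ({0<..} \<times> UNIV) p * g p))"
    by (simp add: fun_eq_iff)
  show ?thesis unfolding PI_def set_lebesgue_integral_def real_scaleR_def e by simp
qed

lemma PI_sum: assumes "finite I" "\<And>i. i \<in> I \<Longrightarrow> bsupp (g i)" shows "PI (\<lambda>p. \<Sum>i\<in>I. g i p) = (\<Sum>i\<in>I. PI (g i))"
proof -
  have e: "(\<lambda>p. indicator ({0<..} \<times> UNIV) p * (\<Sum>i\<in>I. g i p)) = (\<lambda>p. \<Sum>i\<in>I. indicator ({0<..} \<times> UNIV) p * g i p)"
    by (simp add: fun_eq_iff sum_distrib_left)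
  show ?thesis unfolding PI_def set_lebesgue_integral_def real_scaleR_def e
    by (rule Bochner_Integration.integral_sum) (use bsupp_PI assms(2) in auto)
qed

lemma cont_slice1: "continuous_on UNIV h \<Longrightarrow> continuous_on UNIV (\<lambda>x. h (t, x))"
  by (rule continuous_on_compose2[of UNIV h UNIV "\<lambda>x. (t,x)"]) (auto intro!: continuous_intros)

lemma cont_slice2: "continuous_on UNIV h \<Longrightarrow> continuous_on UNIV (\<lambda>t. h (t, x))"
  by (rule continuous_on_compose2[of UNIV h UNIV "\<lambda>t. (t,x)"]) (auto intro!: continuous_intros)

lemma cont_line: "continuous_on UNIV (h :: real \<times> real \<Rightarrow> real) \<Longrightarrow> continuous_on UNIV (\<lambda>t. h (t, y + s * t))"
proof (rule continuous_on_compose2[of UNIV h UNIV "\<lambda>t. (t, y + s * t)"])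
  have "continuous_on UNIV (\<lambda>t. y + s * t)" by (intro continuous_intros)
  then show "continuous_on UNIV (\<lambda>t. (t, y + s * t))"
    by (intro continuous_on_Pair continuous_on_id)
qed auto

lemma halfplane_borel: "{p::real\<times>real. s * fst p \<le> snd p} \<in> sets borel"
  by (intro borel_closed closed_Collect_le) (auto intro!: continuous_intros)

context testf
begin

lemma tfradius: "\<exists>R. R > 0 \<and> (\<forall>t x. \<bar>t\<bar> \<ge> R \<longrightarrow> phi (t,x) = 0 \<and> phit (t,x) = 0 \<and> phix (t,x) = 0) \<and>
    (\<forall>t x. \<bar>x\<bar> \<ge> R \<longrightarrow> phi (t,x) = 0 \<and> phit (t,x) = 0 \<and> phix (t,x) = 0)"
proof -
  obtain K where K: "compact K" "\<forall>p. p \<notin> K \<longrightarrow> phi p = 0 \<and> phit p = 0 \<and> phix p = 0"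
    using tfsupp by blast
  obtain R where R: "R > 0" "K \<subseteq> ball 0 R" using compact_imp_bounded[OF K(1)] bounded_subset_ballD by blast
  have out1: "(t,x) \<notin> K" if "\<bar>t\<bar> \<ge> R" for t x
  proof
    assume "(t,x) \<in> K" then have "norm (t,x) < R" using R by auto
    moreover have "\<bar>t\<bar> \<le> norm (t,x)" by (metis fst_conv norm_fst_le real_norm_def)
    ultimately show False using that by simp
  qed
  have out2: "(t,x) \<notin> K" if "\<bar>x\<bar> \<ge> R" for t x
  proof
    assume "(t,x) \<in> K" then have "norm (t,x) < R" using R by auto
    moreover have "\<bar>x\<bar> \<le> norm (t,x)" by (metis snd_conv norm_snd_le real_norm_def)
    ultimately show False using that by simp
  qed
  show ?thesis using R(1) out1 out2 K(2) by blast
qed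

lemma PI_t: "PI phit = - (\<integral>x. phi (0, x) \<partial>lborel)"
proof -
  obtain R where R: "R > 0" "\<And>t x. \<bar>t\<bar> \<ge> R \<Longrightarrow> phi (t,x) = 0 \<and> phit (t,x) = 0 \<and> phix (t,x) = 0"
    using tfradius by auto
  have "PI phit = (\<integral>x. (\<integral>t. indicator {0<..} t * phit (t,x) \<partial>lborel) \<partial>lborel)"
    by (rule PI_snd[OF bsupp_t])
  also have "\<dots> = (\<integral>x. - phi (0,x) \<partial>lborel)"
  proof (rule Bochner_Integration.integral_cong[OF refl])
    fix x
    show "(\<integral>t. indicator {0<..} t * phit (t,x) \<partial>lborel) = - phi (0,x)"
      by (rule ftc_ray'[where G="\<lambda>t. phi (t,x)" and R=R]) (use R deriv_t cont_slice2[OF cont_t] in auto)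
  qed
  finally show ?thesis by simp
qed

lemma PI_x: "PI phix = 0"
proof -
  obtain R where R: "R > 0" "\<And>t x. \<bar>x\<bar> \<ge> R \<Longrightarrow> phi (t,x) = 0 \<and> phit (t,x) = 0 \<and> phix (t,x) = 0"
    using tfradius by auto
  have "PI phix = (\<integral>t. indicator {0<..} t * (\<integral>x. phix (t,x) \<partial>lborel) \<partial>lborel)"
    by (rule PI_fst[OF bsupp_x])
  also have "\<dots> = 0"
  proof -
    have "(\<integral>x. phix (t,x) \<partial>lborel) = 0" for t
      by (rule ftc_line[where G="\<lambda>x. phi (t,x)" and R=R]) (use R deriv_x cont_slice1[OF cont_x] in auto)
    then show ?thesis by simp
  qed
  finally show ?thesis .
qed

lemma PI_x_half: "PI (\<lambda>(t,x). indicator {s*t..} x * phix (t,x)) \<le> 0"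
proof -
  obtain R where R: "R > 0" "\<And>t x. \<bar>x\<bar> \<ge> R \<Longrightarrow> phi (t,x) = 0 \<and> phit (t,x) = 0 \<and> phix (t,x) = 0"
    using tfradius by auto
  note meas = halfplane_borel[of s]
  have "bsupp (\<lambda>p. indicator {p. s * fst p \<le> snd p} p * phix p)"
    by (rule bsupp_ind[OF meas bsupp_x])
  moreover have "(\<lambda>(t,x). indicator {s*t..} x * phix (t,x)) = (\<lambda>p. indicator {p. s * fst p \<le> snd p} p * phix p)"
    by (auto simp: fun_eq_iff split: split_indicator)
  ultimately have bs: "bsupp (\<lambda>(t,x). indicator {s*t..} x * phix (t,x))" by simp
  have "PI (\<lambda>(t,x). indicator {s*t..} x * phix (t,x)) = (\<integral>t. indicator {0<..} t * (\<integral>x. indicator {s*t..} x * phix (t,x) \<partial>lborel) \<partial>lborel)"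
    using PI_fst[OF bs] by simp
  also have "\<dots> = (\<integral>t. indicator {0<..} t * (- phi (t, s*t)) \<partial>lborel)"
  proof -
    have "(\<integral>x. indicator {s*t..} x * phix (t,x) \<partial>lborel) = - phi (t, s*t)" for t
      by (rule ftc_ray[where G="\<lambda>x. phi (t,x)" and R=R]) (use R deriv_x cont_slice1[OF cont_x] in auto)
    then show ?thesis by simp
  qed
  also have "\<dots> \<le> 0"
  proof -
    have "0 \<le> (\<integral>t. indicator {0<..} t * phi (t, s*t) \<partial>lborel)"
      by (rule Bochner_Integration.integral_nonneg) (use nonneg in simp)
    moreover have "(\<integral>t. indicator {0<..} t * (- phi (t, s*t)) \<partial>lborel) = - (\<integral>t. indicator {0<..} t * phi (t, s*t) \<partial>lborel)"
      using integral_minus[of lborel "\<lambda>t. indicator {0<..} t * phi (t, s*t)"] by simp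
    ultimately show ?thesis by linarith
  qed
  finally show ?thesis .
qed

lemma PI_shock: "PI (\<lambda>(t,x). indicator {s*t..} x * (phit (t,x) + s * phix (t,x))) = - (\<integral>x. indicator {0..} x * phi (0,x) \<partial>lborel)"
proof -
  obtain R where R: "R > 0" "\<And>t x. \<bar>t\<bar> \<ge> R \<Longrightarrow> phi (t,x) = 0 \<and> phit (t,x) = 0 \<and> phix (t,x) = 0"
    "\<And>t x. \<bar>x\<bar> \<ge> R \<Longrightarrow> phi (t,x) = 0 \<and> phit (t,x) = 0 \<and> phix (t,x) = 0"
    using tfradius by auto
  define Phi where "Phi = (\<lambda>p. phit p + s * phix p)"
  have bPhi: "bsupp Phi" unfolding Phi_def by (intro bsupp_add bsupp_cmult bsupp_t bsupp_x)
  note meas = halfplane_borel[of s]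
  have "bsupp (\<lambda>p. indicator {p. s * fst p \<le> snd p} p * Phi p)"
    by (rule bsupp_ind[OF meas bPhi])
  moreover have "(\<lambda>(t,x). indicator {s*t..} x * (phit (t,x) + s * phix (t,x))) = (\<lambda>p. indicator {p. s * fst p \<le> snd p} p * Phi p)"
    by (auto simp: fun_eq_iff Phi_def indicator_def)
  ultimately have bs: "bsupp (\<lambda>(t,x). indicator {s*t..} x * (phit (t,x) + s * phix (t,x)))" by simp
  define Psi where "Psi = (\<lambda>t y. phit (t, y + s*t) + s * phix (t, y + s*t))"
  have Psi0: "Psi t y = 0" if "\<bar>t\<bar> \<ge> R \<or> \<bar>y\<bar> \<ge> R + \<bar>s\<bar> * R" for t y
  proof (cases "\<bar>t\<bar> \<ge> R")
    case True then show ?thesis using R(2) unfolding Psi_def by simp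
  next
    case False
    then have "\<bar>y\<bar> \<ge> R + \<bar>s\<bar> * R" using that by simp
    moreover have "\<bar>s * t\<bar> \<le> \<bar>s\<bar> * R" using False by (simp add: abs_mult mult_left_mono)
    ultimately have "\<bar>y + s*t\<bar> \<ge> R" by linarith
    then show ?thesis using R(3) unfolding Psi_def by simp
  qed
  have cPsi: "continuous_on UNIV (\<lambda>p. Psi (fst p) (snd p))"
  proof -
    have c1: "continuous_on UNIV (\<lambda>p::real\<times>real. (fst p, snd p + s * fst p))"
      by (intro continuous_intros)
    have "continuous_on UNIV (\<lambda>p::real\<times>real. phit (fst p, snd p + s * fst p))"
      by (rule continuous_on_compose2[OF cont_t c1]) auto
    moreover have "continuous_on UNIV (\<lambda>p::real\<times>real. phix (fst p, snd p + s * fst p))"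
      by (rule continuous_on_compose2[OF cont_x c1]) auto
    ultimately show ?thesis unfolding Psi_def by (intro continuous_intros)
  qed
  define Q where "Q = (\<lambda>p::real\<times>real. indicator ({0<..} \<times> {0..}) p * Psi (fst p) (snd p))"
  have bQ: "bsupp Q" unfolding Q_def
  proof (rule bsupp_ind)
    show "{0<..} \<times> {0..} \<in> sets (borel :: (real\<times>real) measure)"
      by (rule borel_Times) auto
    show "bsupp (\<lambda>p. Psi (fst p) (snd p))"
    proof (rule bsupp_cont[OF cPsi])
      show "compact ({-R..R} \<times> {-(R + \<bar>s\<bar> * R)..R + \<bar>s\<bar> * R})" by (intro compact_Times compact_Icc)
      fix p :: "real \<times> real" assume "p \<notin> {-R..R} \<times> {-(R + \<bar>s\<bar> * R)..R + \<bar>s\<bar> * R}"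
      then have "\<bar>fst p\<bar> \<ge> R \<or> \<bar>snd p\<bar> \<ge> R + \<bar>s\<bar> * R" by (cases p) auto
      then show "Psi (fst p) (snd p) = 0" by (rule Psi0)
    qed
  qed
  then have "integrable lborel Q" by (rule bsupp_integrable)
  moreover have "Q = (\<lambda>(t,y). indicator {0<..} t * (indicator {0..} y * Psi t y))"
    by (auto simp: Q_def fun_eq_iff indicator_def)
  ultimately have IQ: "integrable (lborel \<Otimes>\<^sub>M lborel) (\<lambda>(t,y). indicator {0<..} t * (indicator {0..} y * Psi t y))"
    by (simp add: lborel_prod)
  have "PI (\<lambda>(t,x). indicator {s*t..} x * (phit (t,x) + s * phix (t,x))) =
      (\<integral>t. indicator {0<..} t * (\<integral>x. indicator {s*t..} x * (phit (t,x) + s * phix (t,x)) \<partial>lborel) \<partial>lborel)"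
    using PI_fst[OF bs] by simp
  also have "\<dots> = (\<integral>t. indicator {0<..} t * (\<integral>y. indicator {0..} y * Psi t y \<partial>lborel) \<partial>lborel)"
  proof -
    have "(\<integral>x. indicator {s*t..} x * (phit (t,x) + s * phix (t,x)) \<partial>lborel) = (\<integral>y. indicator {0..} y * Psi t y \<partial>lborel)" for t
    proof -
      have "(\<integral>x. indicator {s*t..} x * (phit (t,x) + s * phix (t,x)) \<partial>lborel) =
        \<bar>1\<bar> *\<^sub>R (\<integral>y. indicator {s*t..} (s*t + 1 * y) * (phit (t,s*t + 1 * y) + s * phix (t,s*t + 1 * y)) \<partial>lborel)"
        by (rule lborel_integral_real_affine) simp
      also have "\<dots> = (\<integral>y. indicator {0..} y * Psi t y \<partial>lborel)"
        by (simp add: Psi_def indicator_def add.commute)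
      finally show ?thesis .
    qed
    then show ?thesis by simp
  qed
  also have "\<dots> = (\<integral>t. (\<integral>y. indicator {0<..} t * (indicator {0..} y * Psi t y) \<partial>lborel) \<partial>lborel)"
    by simp
  also have "\<dots> = (\<integral>y. (\<integral>t. indicator {0<..} t * (indicator {0..} y * Psi t y) \<partial>lborel) \<partial>lborel)"
    using lborel_pair.Fubini_integral[OF IQ] by simp
  also have "\<dots> = (\<integral>y. indicator {0..} y * (- phi (0, y)) \<partial>lborel)"
  proof -
    have "(\<integral>t. indicator {0<..} t * (indicator {0..} y * Psi t y) \<partial>lborel) = indicator {0..} y * (- phi (0, y))" for y
    proof -
      have "(\<integral>t. indicator {0<..} t * Psi t y \<partial>lborel) = - phi (0, y + s * 0)"
      proof (rule ftc_ray'[where G="\<lambda>t. phi (t, y + s*t)" and R=R])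
        show "\<And>t. ((\<lambda>t. phi (t, y + s * t)) has_real_derivative Psi t y) (at t)"
          unfolding Psi_def by (rule deriv_line)
        show "continuous_on UNIV (\<lambda>t. Psi t y)" unfolding Psi_def
          by (intro continuous_intros cont_line cont_t cont_x)
        show "\<And>t. R \<le> \<bar>t\<bar> \<Longrightarrow> phi (t, y + s * t) = 0" using R(2) by simp
        show "\<And>t. R \<le> \<bar>t\<bar> \<Longrightarrow> Psi t y = 0" using Psi0 by simp
      qed
      then have "(\<integral>t. indicator {0..} y * (indicator {0<..} t * Psi t y) \<partial>lborel) = indicator {0..} y * (- phi (0, y))"
        by simp
      then show ?thesis by (simp add: mult.left_commute)
    qed
    then show ?thesis by simp
  qed
  also have "\<dots> = - (\<integral>x. indicator {0..} x * phi (0,x) \<partial>lborel)"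
    using integral_minus[of lborel "\<lambda>x. indicator {0..} x * phi (0,x)"] by simp
  finally show ?thesis .
qed

end

lemma telescope_nat: "(\<Sum>i\<in>{1..m::nat}. (g i - g (i-1))) = g m - (g 0 :: real)"
  by (induction m) (auto simp: sum.cl_ivl_Suc)

lemma sum_ind_restrict:
  fixes m n :: nat
  assumes "m \<le> n"
  shows "(\<Sum>i\<in>{1..n}. c i * (if i \<le> m then 1 else 0)) = (\<Sum>i\<in>{1..m}. (c i :: real))"
proof -
  have "(\<Sum>i\<in>{1..n}. c i * (if i \<le> m then 1 else 0)) = (\<Sum>i\<in>{1..n}. if i \<le> m then c i else 0)"
    by (intro sum.cong) auto
  also have "\<dots> = (\<Sum>i\<in>{1..n} \<inter> {i. i \<le> m}. c i)"
    by (subst sum.inter_restrict) auto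
  also have "{1..n} \<inter> {i. i \<le> m} = {1..m}" using assms by auto
  finally show ?thesis by simp
qed

lemma fan_repr:
  fixes u :: "nat \<Rightarrow> real" and \<tau> :: "nat \<Rightarrow> real" and idx :: "real \<Rightarrow> nat" and Z :: "real \<Rightarrow> real"
  assumes idxn: "idx \<xi> \<le> n" and tau: "\<And>i. 1 \<le> i \<Longrightarrow> i \<le> n \<Longrightarrow> (\<tau> i \<le> \<xi> \<longleftrightarrow> i \<le> idx \<xi>)"
  shows "Z (u (idx \<xi>)) = Z (u 0) + (\<Sum>i\<in>{1..n}. (Z (u i) - Z (u (i-1))) * indicator {\<tau> i..} \<xi>)"
proof -
  have "(\<Sum>i\<in>{1..n}. (Z (u i) - Z (u (i-1))) * indicator {\<tau> i..} \<xi>) =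
      (\<Sum>i\<in>{1..n}. (Z (u i) - Z (u (i-1))) * (if i \<le> idx \<xi> then 1 else 0))"
    by (intro sum.cong refl) (use tau in \<open>auto simp: indicator_def\<close>)
  also have "\<dots> = (\<Sum>i\<in>{1..idx \<xi>}. (Z (u i) - Z (u (i-1))))"
    by (rule sum_ind_restrict[OF idxn])
  also have "\<dots> = Z (u (idx \<xi>)) - Z (u 0)"
    by (rule telescope_nat)
  finally show ?thesis by simp
qed

lemma PI_cong: "(\<And>t x. t > 0 \<Longrightarrow> f (t,x) = g (t,x)) \<Longrightarrow> PI f = PI g"
  unfolding PI_def by (rule set_lebesgue_integral_cong) (use half_borel in auto)

context testf
begin

lemma bsupp_half: "bsupp (\<lambda>(t,x). indicator {s*t..} x * phix (t,x))"
proof -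
  have "bsupp (\<lambda>p. indicator {p. s * fst p \<le> snd p} p * phix p)"
    by (rule bsupp_ind[OF halfplane_borel bsupp_x])
  moreover have "(\<lambda>(t,x). indicator {s*t..} x * phix (t,x)) = (\<lambda>p. indicator {p. s * fst p \<le> snd p} p * phix p)"
    by (auto simp: fun_eq_iff indicator_def)
  ultimately show ?thesis by simp
qed

lemma bsupp_shock: "bsupp (\<lambda>(t,x). indicator {s*t..} x * (phit (t,x) + s * phix (t,x)))"
proof -
  have "bsupp (\<lambda>p. indicator {p. s * fst p \<le> snd p} p * (phit p + s * phix p))"
    by (intro bsupp_ind[OF halfplane_borel] bsupp_add bsupp_cmult bsupp_t bsupp_x)
  moreover have "(\<lambda>(t,x). indicator {s*t..} x * (phit (t,x) + s * phix (t,x))) = (\<lambda>p. indicator {p. s * fst p \<le> snd p} p * (phit p + s * phix p))"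
    by (auto simp: fun_eq_iff indicator_def)
  ultimately show ?thesis by simp
qed

lemma integrable_phi0: "integrable lborel (\<lambda>x. phi (0, x))"
proof -
  obtain R where R: "R > 0" "\<And>t x. \<bar>x\<bar> \<ge> R \<Longrightarrow> phi (t,x) = 0 \<and> phit (t,x) = 0 \<and> phix (t,x) = 0"
    using tfradius by auto
  have "bsupp (\<lambda>x. phi (0, x))"
  proof (rule bsupp_cont[OF cont_slice1[OF cont]])
    show "compact {-R..R}" by simp
    show "\<And>x. x \<notin> {-R..R} \<Longrightarrow> phi (0, x) = 0" using R(2) by auto
  qed
  then show ?thesis by (rule bsupp_integrable)
qed

lemma fan_identity:
  fixes u :: "nat \<Rightarrow> real" and \<tau> :: "nat \<Rightarrow> real" and idx :: "real \<Rightarrow> nat" and eta G :: "real \<Rightarrow> real"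
  assumes idxn: "\<And>\<xi>. idx \<xi> \<le> n" and tau: "\<And>i \<xi>. 1 \<le> i \<Longrightarrow> i \<le> n \<Longrightarrow> (\<tau> i \<le> \<xi> \<longleftrightarrow> i \<le> idx \<xi>)"
  shows "PI (\<lambda>p. eta (u (idx (snd p / fst p))) * phit p + G (u (idx (snd p / fst p))) * phix p)
     + (\<integral>x. eta (if x < 0 then u 0 else u n) * phi (0, x) \<partial>lborel)
   = (\<Sum>i\<in>{1..n}. (G (u i) - G (u (i-1)) - \<tau> i * (eta (u i) - eta (u (i-1)))) * PI (\<lambda>(t,x). indicator {\<tau> i * t..} x * phix (t,x)))"
proof -
  define De where "De i = eta (u i) - eta (u (i-1))" for i
  define DG where "DG i = G (u i) - G (u (i-1))" for i
  define C where "C i = DG i - \<tau> i * De i" for i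
  define sh where "sh i = (\<lambda>(t,x). indicator {\<tau> i*t..} x * (phit (t,x) + \<tau> i * phix (t,x)))" for i
  define hf where "hf i = (\<lambda>(t,x). indicator {\<tau> i*t..} x * phix (t,x))" for i
  define E where "E = (\<lambda>p. eta (u 0) * phit p + G (u 0) * phix p + (\<Sum>i\<in>{1..n}. De i * sh i p + C i * hf i p))"
  have eqE: "PI (\<lambda>p. eta (u (idx (snd p / fst p))) * phit p + G (u (idx (snd p / fst p))) * phix p) = PI E"
  proof (rule PI_cong)
    fix t x :: real assume t: "t > 0"
    have ind: "indicator {\<tau> i..} (x / t) = (indicator {\<tau> i * t..} x :: real)" for i
      using t by (simp add: indicator_def pos_le_divide_eq)
    have r1: "eta (u (idx (x/t))) = eta (u 0) + (\<Sum>i\<in>{1..n}. De i * indicator {\<tau> i * t..} x)"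
      using fan_repr[of idx "x/t" n \<tau> eta u, OF idxn tau] unfolding De_def ind by simp
    have r2: "G (u (idx (x/t))) = G (u 0) + (\<Sum>i\<in>{1..n}. DG i * indicator {\<tau> i * t..} x)"
      using fan_repr[of idx "x/t" n \<tau> G u, OF idxn tau] unfolding DG_def ind by simp
    have "eta (u (idx (x/t))) * phit (t,x) + G (u (idx (x/t))) * phix (t,x) =
       eta (u 0) * phit (t,x) + G (u 0) * phix (t,x) +
       (\<Sum>i\<in>{1..n}. De i * indicator {\<tau> i * t..} x * phit (t,x) + DG i * indicator {\<tau> i * t..} x * phix (t,x))"
      unfolding r1 r2 distrib_right sum_distrib_right sum.distrib by (simp only: add_ac)
    also have "\<dots> = E (t,x)"
    proof -
      have "(\<Sum>i\<in>{1..n}. De i * indicator {\<tau> i * t..} x * phit (t,x) + DG i * indicator {\<tau> i * t..} x * phix (t,x))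
         = (\<Sum>i\<in>{1..n}. De i * sh i (t,x) + C i * hf i (t,x))"
        by (rule sum.cong[OF refl]) (simp add: sh_def hf_def C_def algebra_simps)
      then show ?thesis unfolding E_def by simp
    qed
    finally show "eta (u (idx (snd (t,x) / fst (t,x)))) * phit (t,x) + G (u (idx (snd (t,x) / fst (t,x)))) * phix (t,x) = E (t,x)"
      by simp
  qed
  have bsh: "bsupp (sh i)" for i unfolding sh_def by (rule bsupp_shock)
  have bhf: "bsupp (hf i)" for i unfolding hf_def by (rule bsupp_half)
  have bsum: "bsupp (\<lambda>p. De i * sh i p + C i * hf i p)" for i
    by (intro bsupp_add bsupp_cmult bsh bhf)
  have bsum2: "bsupp (\<lambda>p. \<Sum>i\<in>{1..n}. De i * sh i p + C i * hf i p)"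
  proof -
    have "\<forall>I. finite I \<longrightarrow> bsupp (\<lambda>p. \<Sum>i\<in>I. De i * sh i p + C i * hf i p)"
    proof (intro allI impI)
      fix I :: "nat set" assume "finite I"
      then show "bsupp (\<lambda>p. \<Sum>i\<in>I. De i * sh i p + C i * hf i p)"
      proof (induction I rule: finite_induct)
        case empty
        have "compact ({}::(real\<times>real) set)" by simp
        then show ?case unfolding bsupp_def by auto
      next
        case (insert a F) then show ?case by (simp add: bsupp_add bsum)
      qed
    qed
    then show ?thesis by simp
  qed
  have "PI E = eta (u 0) * PI phit + G (u 0) * PI phix + (\<Sum>i\<in>{1..n}. De i * PI (sh i) + C i * PI (hf i))"
  proof -
    have "PI E = PI (\<lambda>p. eta (u 0) * phit p + G (u 0) * phix p) + PI (\<lambda>p. \<Sum>i\<in>{1..n}. De i * sh i p + C i * hf i p)"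
      unfolding E_def by (rule PI_add[OF bsupp_add[OF bsupp_cmult[OF bsupp_t] bsupp_cmult[OF bsupp_x]] bsum2])
    also have "PI (\<lambda>p. eta (u 0) * phit p + G (u 0) * phix p) = eta (u 0) * PI phit + G (u 0) * PI phix"
      by (simp add: PI_add bsupp_cmult bsupp_t bsupp_x PI_cmult)
    also have "PI (\<lambda>p. \<Sum>i\<in>{1..n}. De i * sh i p + C i * hf i p) = (\<Sum>i\<in>{1..n}. PI (\<lambda>p. De i * sh i p + C i * hf i p))"
      by (rule PI_sum) (auto intro: bsum)
    also have "\<dots> = (\<Sum>i\<in>{1..n}. De i * PI (sh i) + C i * PI (hf i))"
      by (intro sum.cong refl) (simp add: PI_add bsupp_cmult bsh bhf PI_cmult)
    finally show ?thesis .
  qed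
  also have "\<dots> = - eta (u 0) * (\<integral>x. phi (0,x) \<partial>lborel) - (eta (u n) - eta (u 0)) * (\<integral>x. indicator {0..} x * phi (0,x) \<partial>lborel)
      + (\<Sum>i\<in>{1..n}. C i * PI (hf i))"
  proof -
    have "PI (sh i) = - (\<integral>x. indicator {0..} x * phi (0,x) \<partial>lborel)" for i
      unfolding sh_def by (rule PI_shock)
    then have "(\<Sum>i\<in>{1..n}. De i * PI (sh i) + C i * PI (hf i)) = - (\<Sum>i\<in>{1..n}. De i) * (\<integral>x. indicator {0..} x * phi (0,x) \<partial>lborel) + (\<Sum>i\<in>{1..n}. C i * PI (hf i))"
      by (simp add: sum.distrib sum_distrib_right sum_subtractf)
    moreover have "(\<Sum>i\<in>{1..n}. De i) = eta (u n) - eta (u 0)"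
      unfolding De_def by (rule telescope_nat)
    ultimately show ?thesis using PI_t PI_x by simp
  qed
  finally have L: "PI (\<lambda>p. eta (u (idx (snd p / fst p))) * phit p + G (u (idx (snd p / fst p))) * phix p) =
     - eta (u 0) * (\<integral>x. phi (0,x) \<partial>lborel) - (eta (u n) - eta (u 0)) * (\<integral>x. indicator {0..} x * phi (0,x) \<partial>lborel)
      + (\<Sum>i\<in>{1..n}. C i * PI (hf i))" using eqE by simp
  have init: "(\<integral>x. eta (if x < 0 then u 0 else u n) * phi (0, x) \<partial>lborel) =
     eta (u 0) * (\<integral>x. phi (0,x) \<partial>lborel) + (eta (u n) - eta (u 0)) * (\<integral>x. indicator {0..} x * phi (0,x) \<partial>lborel)"
  proof -
    have "(\<lambda>x. eta (if x < 0 then u 0 else u n) * phi (0, x)) = (\<lambda>x. eta (u 0) * phi (0,x) + (eta (u n) - eta (u 0)) * (indicator {0..} x * phi (0,x)))"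
      by (auto simp: fun_eq_iff indicator_def algebra_simps)
    moreover have "integrable lborel (\<lambda>x. indicator {0..} x * phi (0,x))"
      using integrable_real_mult_indicator[OF _ integrable_phi0, of "{0..}"] by (simp add: mult.commute)
    ultimately show ?thesis using integrable_phi0 by simp
  qed
  show ?thesis unfolding L init C_def DG_def De_def hf_def by simp
qed

end

locale grid =
  fixes uL uR :: real and n :: nat and f :: "real \<Rightarrow> real"
  assumes lr: "uL < uR" and npos: "n > 0"
begin

definition dl :: real where "dl = (uR - uL) / n"
definition u :: "nat \<Rightarrow> real" where "u i = uL + i * dl"
definition val :: "real \<Rightarrow> nat \<Rightarrow> real" where "val \<xi> i = f (u i) - \<xi> * u i"
definition mval :: "real \<Rightarrow> real" where "mval \<xi> = Min (val \<xi> ` {0..n})"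
definition idx :: "real \<Rightarrow> nat" where "idx \<xi> = Max {i. i \<le> n \<and> val \<xi> i = mval \<xi>}"

lemma dl_pos: "dl > 0" unfolding dl_def using lr npos by simp

lemma u_mono: "i < j \<Longrightarrow> u i < u j"
  unfolding u_def using dl_pos by (simp add: mult_strict_right_mono)

lemma u_mono': "i \<le> j \<Longrightarrow> u i \<le> u j"
  using u_mono by (cases "i = j") (auto simp: less_le)

lemma u0: "u 0 = uL" and un: "u n = uR"
  unfolding u_def dl_def using npos by auto

lemma u_range: "i \<le> n \<Longrightarrow> u i \<in> {uL..uR}"
  using u_mono'[of 0 i] u_mono'[of i n] u0 un by auto

lemma u_diff: "i \<le> j \<Longrightarrow> u j - u i = (real j - real i) * dl"
  unfolding u_def by (simp add: algebra_simps)

lemma mval_le: "j \<le> n \<Longrightarrow> mval \<xi> \<le> val \<xi> j"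
  unfolding mval_def by (rule Min_le) auto

lemma mval_ex: "\<exists>j\<le>n. val \<xi> j = mval \<xi>"
proof -
  have "mval \<xi> \<in> val \<xi> ` {0..n}" unfolding mval_def by (rule Min_in) auto
  then show ?thesis by auto
qed

lemma minset_fin: "finite {i. i \<le> n \<and> val \<xi> i = mval \<xi>}" by simp

lemma minset_ne: "{i. i \<le> n \<and> val \<xi> i = mval \<xi>} \<noteq> {}" using mval_ex by auto

lemma idx_in: "idx \<xi> \<le> n \<and> val \<xi> (idx \<xi>) = mval \<xi>"
  using Max_in[OF minset_fin minset_ne] unfolding idx_def by simp

lemma idx_le: "idx \<xi> \<le> n" using idx_in by simp

lemma idx_min: "j \<le> n \<Longrightarrow> val \<xi> (idx \<xi>) \<le> val \<xi> j"
  using idx_in mval_le by simp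

lemma idx_greatest: "j \<le> n \<Longrightarrow> val \<xi> j \<le> val \<xi> (idx \<xi>) \<Longrightarrow> j \<le> idx \<xi>"
proof -
  assume j: "j \<le> n" "val \<xi> j \<le> val \<xi> (idx \<xi>)"
  moreover have "mval \<xi> \<le> val \<xi> j" by (rule mval_le[OF j(1)])
  moreover have "val \<xi> (idx \<xi>) = mval \<xi>" using idx_in by simp
  ultimately have "val \<xi> j = mval \<xi>" by linarith
  then show ?thesis unfolding idx_def using j(1) by (intro Max_ge) auto
qed

lemma idx_mono:
  assumes "\<xi>1 \<le> \<xi>2" shows "idx \<xi>1 \<le> idx \<xi>2"
proof (rule ccontr)
  assume c: "\<not> idx \<xi>1 \<le> idx \<xi>2"
  define j1 j2 where "j1 = idx \<xi>1" and "j2 = idx \<xi>2"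
  have lt: "j2 < j1" using c unfolding j1_def j2_def by simp
  have a: "val \<xi>1 j1 \<le> val \<xi>1 j2" unfolding j1_def j2_def by (rule idx_min[OF idx_le])
  have b: "val \<xi>2 j2 \<le> val \<xi>2 j1" unfolding j1_def j2_def by (rule idx_min[OF idx_le])
  have "(\<xi>2 - \<xi>1) * (u j1 - u j2) \<le> 0" using a b unfolding val_def by (simp add: algebra_simps)
  moreover have "u j2 < u j1" using u_mono[OF lt] .
  ultimately have "\<xi>2 = \<xi>1" using assms by (smt (verit) mult_pos_pos)
  then show False using c by simp
qed

lemma idx_right: "eventually (\<lambda>\<xi>'. idx \<xi>' = idx \<xi>) (at_right \<xi>)"
proof -
  define j where "j = idx \<xi>"
  have j: "j \<le> n" unfolding j_def by (rule idx_le)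
  have "\<forall>l\<in>{j<..n}. eventually (\<lambda>\<xi>'. val \<xi>' j < val \<xi>' l) (at \<xi>)"
  proof
    fix l assume l: "l \<in> {j<..n}"
    have "val \<xi> j < val \<xi> l"
    proof (rule ccontr)
      assume "\<not> val \<xi> j < val \<xi> l"
      then have "l \<le> idx \<xi>" using l unfolding j_def by (intro idx_greatest) auto
      then show False using l unfolding j_def by auto
    qed
    moreover have "((\<lambda>\<xi>'. val \<xi>' l - val \<xi>' j) \<longlongrightarrow> val \<xi> l - val \<xi> j) (at \<xi>)"
      unfolding val_def by (intro tendsto_intros)
    ultimately have "eventually (\<lambda>\<xi>'. val \<xi>' l - val \<xi>' j > 0) (at \<xi>)"
      by (intro order_tendstoD(1)) auto
    then show "eventually (\<lambda>\<xi>'. val \<xi>' j < val \<xi>' l) (at \<xi>)" by (rule eventually_mono) auto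
  qed
  then have "eventually (\<lambda>\<xi>'. \<forall>l\<in>{j<..n}. val \<xi>' j < val \<xi>' l) (at \<xi>)"
    by (intro eventually_ball_finite) auto
  then have ev: "eventually (\<lambda>\<xi>'. \<forall>l\<in>{j<..n}. val \<xi>' j < val \<xi>' l) (at_right \<xi>)"
    by (simp add: eventually_at_split)
  have "eventually (\<lambda>\<xi>'. \<xi>' > \<xi>) (at_right \<xi>)" by (simp add: eventually_at_right_less)
  then show ?thesis using ev
  proof (eventually_elim)
    case (elim \<xi>')
    have lower: "val \<xi>' j \<le> val \<xi>' l" if "l \<le> j" for l
    proof -
      have "val \<xi> j \<le> val \<xi> l" unfolding j_def using that j by (intro idx_min) auto
      moreover have "u l \<le> u j" using u_mono' that by simp
      moreover have "(\<xi>' - \<xi>) * (u j - u l) \<ge> 0" using elim(1) \<open>u l \<le> u j\<close> by simp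
      then have "\<xi>' * u j - \<xi>' * u l - \<xi> * u j + \<xi> * u l \<ge> 0" by (simp add: algebra_simps)
      ultimately show ?thesis unfolding val_def by linarith
    qed
    have jmin: "val \<xi>' j \<le> val \<xi>' l" if "l \<le> n" for l
    proof (cases "l \<le> j")
      case False then have "l \<in> {j<..n}" using that by auto
      then show ?thesis using elim(2) by (meson less_imp_le)
    qed (rule lower)
    have "j \<le> idx \<xi>'" using jmin[OF idx_le] j by (intro idx_greatest) auto
    moreover have "idx \<xi>' \<le> j"
    proof (rule ccontr)
      assume "\<not> idx \<xi>' \<le> j"
      then have "idx \<xi>' \<in> {j<..n}" using idx_le by auto
      then have "val \<xi>' j < val \<xi>' (idx \<xi>')" using elim(2) by auto
      moreover have "val \<xi>' (idx \<xi>') \<le> val \<xi>' j" using idx_min j by auto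
      ultimately show False by simp
    qed
    ultimately show ?case unfolding j_def by simp
  qed
qed

definition bnd :: real where "bnd = Max ((\<lambda>j. \<bar>f (u j)\<bar>) ` {0..n})"

lemma bnd: "j \<le> n \<Longrightarrow> \<bar>f (u j)\<bar> \<le> bnd"
  unfolding bnd_def by (rule Max_ge) auto

lemma u_gap: "i < j \<Longrightarrow> u j - u i \<ge> dl"
proof -
  assume "i < j"
  then have "real j - real i \<ge> 1" by simp
  then have "(real j - real i) * dl \<ge> 1 * dl" using dl_pos by (intro mult_right_mono) auto
  then show ?thesis using u_diff[of i j] \<open>i < j\<close> by simp
qed

lemma idx_large: "\<xi> \<ge> 2 * bnd / dl + 1 \<Longrightarrow> idx \<xi> = n"
proof -
  assume xi: "\<xi> \<ge> 2 * bnd / dl + 1"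
  have "val \<xi> n \<le> val \<xi> j" if "j \<le> n" for j
  proof (cases "j = n")
    case False
    then have jn: "j < n" using that by simp
    have "\<xi> * (u n - u j) \<ge> \<xi> * dl"
      using u_gap[OF jn] xi dl_pos bnd[of 0] by (intro mult_left_mono) (auto intro: order_trans[OF _ xi] simp: field_simps)
    moreover have "\<xi> * dl \<ge> (2 * bnd / dl + 1) * dl" using xi dl_pos by (intro mult_right_mono) auto
    moreover have "(2 * bnd / dl + 1) * dl = 2 * bnd + dl" using dl_pos by (simp add: field_simps)
    moreover have "f (u n) - f (u j) \<le> 2 * bnd" using bnd[of n] bnd[of j] jn by (simp add: abs_le_iff)
    ultimately show ?thesis unfolding val_def using dl_pos by (simp add: algebra_simps)
  qed simp
  then have "n \<le> idx \<xi>" using idx_min idx_le by (intro idx_greatest) (auto simp: idx_le)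
  then show ?thesis using idx_le[of \<xi>] by simp
qed

lemma idx_small: "\<xi> \<le> - (2 * bnd / dl + 1) \<Longrightarrow> idx \<xi> = 0"
proof (rule ccontr)
  assume xi: "\<xi> \<le> - (2 * bnd / dl + 1)" and ne: "idx \<xi> \<noteq> 0"
  define j where "j = idx \<xi>"
  have j: "0 < j" "j \<le> n" using ne idx_le unfolding j_def by auto
  have b0: "bnd \<ge> 0" using bnd[of 0] by simp
  have "2 * bnd / dl \<ge> 0" using b0 dl_pos by simp
  then have nx: "- \<xi> \<ge> 0" using xi by linarith
  have "(- \<xi>) * (u j - u 0) \<ge> (- \<xi>) * dl"
    by (rule mult_left_mono[OF u_gap[OF j(1)] nx])
  moreover have "(- \<xi>) * dl \<ge> (2 * bnd / dl + 1) * dl" using xi dl_pos by (intro mult_right_mono) auto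
  moreover have "(2 * bnd / dl + 1) * dl = 2 * bnd + dl" using dl_pos by (simp add: field_simps)
  moreover have "f (u 0) - f (u j) \<le> 2 * bnd" using bnd[of 0] bnd[of j] j by (simp add: abs_le_iff)
  ultimately have "val \<xi> 0 < val \<xi> j" unfolding val_def using dl_pos by (simp add: algebra_simps)
  moreover have "val \<xi> j \<le> val \<xi> 0" unfolding j_def by (rule idx_min) simp
  ultimately show False by simp
qed

definition tau :: "nat \<Rightarrow> real" where "tau i = Inf {\<xi>. i \<le> idx \<xi>}"

lemma tau_iff:
  assumes i: "1 \<le> i" "i \<le> n"
  shows "tau i \<le> \<xi> \<longleftrightarrow> i \<le> idx \<xi>"
proof -
  define S where "S = {\<xi>. i \<le> idx \<xi>}"
  define L where "L = - (2 * bnd / dl + 1)"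
  have "2 * bnd / dl + 1 \<in> S" using idx_large[of "2 * bnd / dl + 1"] i unfolding S_def by simp
  then have ne: "S \<noteq> {}" by auto
  have lb: "\<And>s. s \<in> S \<Longrightarrow> L < s"
  proof (rule ccontr)
    fix s assume "s \<in> S" "\<not> L < s"
    then have "idx s = 0" unfolding L_def by (intro idx_small) simp
    then show False using \<open>s \<in> S\<close> i unfolding S_def by simp
  qed
  then have bdd: "bdd_below S" by (meson bdd_belowI less_imp_le)
  have tS: "tau i \<in> S"
  proof (rule ccontr)
    assume nS: "tau i \<notin> S"
    obtain b where b: "b > tau i" "\<And>y. y > tau i \<Longrightarrow> y < b \<Longrightarrow> idx y = idx (tau i)"
      using idx_right[of "tau i"] unfolding eventually_at_right_field by auto
    have "Inf S < b" using b(1) unfolding tau_def S_def by simp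
    then obtain s where s: "s \<in> S" "s < b" using cInf_less_iff[OF ne bdd] by auto
    have "tau i \<le> s" unfolding tau_def S_def using cInf_lower[OF s(1) bdd] unfolding S_def by simp
    moreover have "s \<noteq> tau i" using s(1) nS by auto
    ultimately have "idx s = idx (tau i)" using b s by auto
    then show False using s(1) nS unfolding S_def by simp
  qed
  show ?thesis
  proof
    assume "tau i \<le> \<xi>"
    then have "idx (tau i) \<le> idx \<xi>" by (rule idx_mono)
    then show "i \<le> idx \<xi>" using tS unfolding S_def by simp
  next
    assume "i \<le> idx \<xi>"
    then have "\<xi> \<in> S" unfolding S_def by simp
    then show "tau i \<le> \<xi>" unfolding tau_def S_def using cInf_lower[OF _ bdd] unfolding S_def by simp
  qed
qed

lemma telescope_from: "p \<le> q \<Longrightarrow> (\<Sum>i\<in>{Suc p..q}. (g i - g (i-1))) = g q - (g p :: real)"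
proof (induction q)
  case 0 then show ?case by simp
next
  case (Suc q)
  show ?case
  proof (cases "p = Suc q")
    case True then show ?thesis by simp
  next
    case False
    then have "p \<le> q" using Suc.prems by simp
    then show ?thesis using Suc.IH by (simp add: sum.cl_ivl_Suc)
  qed
qed

lemma shock_ent:
  fixes a b k F fa fb t m :: real
  assumes ab: "a < b" and ea: "fa - t * a = m" and eb: "fb - t * b = m"
    and Fk: "a \<le> k \<Longrightarrow> k \<le> b \<Longrightarrow> F - t * k \<ge> m"
  shows "t * (\<bar>b - k\<bar> - \<bar>a - k\<bar>) - (sgn (b - k) * (fb - F) - sgn (a - k) * (fa - F)) \<ge> 0"
proof (cases "k < a")
  case True then show ?thesis using ab ea eb by (simp add: algebra_simps)
next
  case ka: False
  show ?thesis
  proof (cases "k > b")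
    case True then show ?thesis using ab ea eb by (simp add: algebra_simps)
  next
    case False
    then have F: "F - t * k \<ge> m" using ka Fk by simp
    consider "k = a" | "k = b" | "a < k" "k < b" using ka False by linarith
    then show ?thesis
    proof cases
      case 1 then show ?thesis using ab ea eb F by (simp add: algebra_simps)
    next
      case 2 then show ?thesis using ab ea eb F by (simp add: algebra_simps)
    next
      case 3
      then have "\<bar>b - k\<bar> = b - k" "\<bar>a - k\<bar> = k - a" "sgn (b - k) = 1" "sgn (a - k) = -1" by auto
      then show ?thesis using ea eb F by (simp add: algebra_simps)
    qed
  qed
qed

lemma group_nonneg:
  fixes k F :: real
  assumes Fc: "\<And>t. k \<in> {uL..uR} \<Longrightarrow> F - t * k \<ge> mval t"
    and t0: "t0 \<in> tau ` {1..n}"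
  shows "0 \<le> (\<Sum>i\<in>{i\<in>{1..n}. tau i = t0}. tau i * (\<bar>u i - k\<bar> - \<bar>u (i-1) - k\<bar>)
            - (sgn (u i - k) * (f (u i) - F) - sgn (u (i-1) - k) * (f (u (i-1)) - F)))"
proof -
  define q where "q = idx t0"
  define P where "P = idx ` {..<t0}"
  have Pfin: "finite P" unfolding P_def
    by (rule finite_subset[of _ "{0..n}"]) (use idx_le in auto)
  have Pne: "P \<noteq> {}" unfolding P_def by (auto intro: exI[of _ "t0 - 1"])
  define p where "p = Max P"
  obtain x1 where x1: "x1 < t0" "idx x1 = p"
    using Max_in[OF Pfin Pne] unfolding p_def P_def by auto
  have pmax: "\<And>x. x < t0 \<Longrightarrow> idx x \<le> p"
    unfolding p_def P_def by (rule Max_ge[OF Pfin[unfolded P_def]]) auto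
  have qn: "q \<le> n" unfolding q_def by (rule idx_le)
  have lt_iff: "tau i < t0 \<longleftrightarrow> i \<le> p" if i: "1 \<le> i" "i \<le> n" for i
  proof
    assume "tau i < t0"
    then have "idx (tau i) \<le> p" by (rule pmax)
    moreover have "i \<le> idx (tau i)" using tau_iff[OF i, of "tau i"] by simp
    ultimately show "i \<le> p" by simp
  next
    assume "i \<le> p"
    then have "tau i \<le> x1" using tau_iff[OF i] x1 by simp
    then show "tau i < t0" using x1 by simp
  qed
  have eq_iff: "tau i = t0 \<longleftrightarrow> p < i \<and> i \<le> q" if i: "1 \<le> i" "i \<le> n" for i
    using lt_iff[OF i] tau_iff[OF i, of t0] unfolding q_def by (auto simp: not_le)
  have set_eq: "{i\<in>{1..n}. tau i = t0} = {Suc p..q}"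
  proof (intro set_eqI iffI)
    fix x assume "x \<in> {i\<in>{1..n}. tau i = t0}"
    then have "1 \<le> x" "x \<le> n" "tau x = t0" by auto
    then show "x \<in> {Suc p..q}" using eq_iff[of x] by auto
  next
    fix x assume x: "x \<in> {Suc p..q}"
    then have "1 \<le> x" "x \<le> n" using qn by auto
    then have "tau x = t0" using eq_iff[of x] x by auto
    then show "x \<in> {i\<in>{1..n}. tau i = t0}" using \<open>1 \<le> x\<close> \<open>x \<le> n\<close> by auto
  qed
  obtain i0 where i0: "i0 \<in> {1..n}" "tau i0 = t0" using t0 by auto
  have pq: "p < q" using eq_iff[of i0] i0 by auto
  define eta where "eta v = \<bar>v - k\<bar>" for v
  define G where "G v = sgn (v - k) * (f v - F)" for v
  have "(\<Sum>i\<in>{i\<in>{1..n}. tau i = t0}. tau i * (\<bar>u i - k\<bar> - \<bar>u (i-1) - k\<bar>)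
            - (sgn (u i - k) * (f (u i) - F) - sgn (u (i-1) - k) * (f (u (i-1)) - F)))
       = (\<Sum>i\<in>{Suc p..q}. (t0 * eta (u i) - G (u i)) - (t0 * eta (u (i-1)) - G (u (i-1))))"
    unfolding set_eq
  proof (rule sum.cong[OF refl])
    fix i assume "i \<in> {Suc p..q}"
    then have "tau i = t0" using eq_iff[of i] qn by auto
    then show "tau i * (\<bar>u i - k\<bar> - \<bar>u (i-1) - k\<bar>)
            - (sgn (u i - k) * (f (u i) - F) - sgn (u (i-1) - k) * (f (u (i-1)) - F))
          = (t0 * eta (u i) - G (u i)) - (t0 * eta (u (i-1)) - G (u (i-1)))"
      unfolding eta_def G_def by (simp add: algebra_simps)
  qed
  also have "\<dots> = (t0 * eta (u q) - G (u q)) - (t0 * eta (u p) - G (u p))"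
    by (rule telescope_from[of p q "\<lambda>i. t0 * eta (u i) - G (u i)"]) (use pq in simp)
  also have "\<dots> = t0 * (\<bar>u q - k\<bar> - \<bar>u p - k\<bar>) - (sgn (u q - k) * (f (u q) - F) - sgn (u p - k) * (f (u p) - F))"
    unfolding eta_def G_def by (simp add: algebra_simps)
  also have "\<dots> \<ge> 0"
  proof (rule shock_ent)
    show "u p < u q" by (rule u_mono[OF pq])
    show "f (u q) - t0 * u q = mval t0" using idx_in[of t0] unfolding q_def val_def by simp
    have pmin: "val t0 p \<le> val t0 j" if j: "j \<le> n" for j
    proof -
    have "0 \<ge> val t0 p - val t0 j"
    proof (rule tendsto_upperbound)
      show "((\<lambda>x. val x p - val x j) \<longlongrightarrow> val t0 p - val t0 j) (at_left t0)"
        unfolding val_def by (intro tendsto_intros)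
      show "\<not> trivial_limit (at_left t0)" by (rule trivial_limit_at_left_real)
      show "eventually (\<lambda>x. 0 \<ge> val x p - val x j) (at_left t0)"
        unfolding eventually_at_left_field
      proof (intro exI[of _ x1] conjI allI impI)
        show "x1 < t0" by (rule x1(1))
        fix y assume y: "x1 < y" "y < t0"
        have "idx y = p" using idx_mono[of x1 y] y x1 pmax[OF y(2)] by simp
        then show "0 \<ge> val y p - val y j" using idx_min[OF j, of y] by simp
      qed
    qed
    then show ?thesis by simp
    qed
    have "p \<le> n" using pq qn by simp
    then have "val t0 p \<le> mval t0" using pmin[OF qn] idx_in[of t0] unfolding q_def by simp
    moreover have "mval t0 \<le> val t0 p" using mval_le \<open>p \<le> n\<close> by simp
    ultimately show "f (u p) - t0 * u p = mval t0" unfolding val_def by simp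
    assume "u p \<le> k" "k \<le> u q"
    then have "k \<in> {uL..uR}" using u_range[of p] u_range[of q] qn \<open>p \<le> n\<close> by auto
    then show "F - t0 * k \<ge> mval t0" by (rule Fc)
  qed
  finally show ?thesis .
qed

end

context grid
begin

definition vn :: "real \<Rightarrow> real" where "vn \<xi> = u (idx \<xi>)"

lemma vn_range: "vn \<xi> \<in> {uL..uR}" unfolding vn_def using u_range idx_le by auto

lemma vn_mono: "mono vn"
  unfolding vn_def mono_def using idx_mono u_mono' by blast

lemma vn_rcont: "continuous (at_right x) vn"
proof -
  have "eventually (\<lambda>y. vn y = vn x) (at_right x)"
    using idx_right[of x] by (rule eventually_mono) (simp add: vn_def)
  then have "(vn \<longlongrightarrow> vn x) (at_right x)" by (rule tendsto_eventually)
  then show ?thesis unfolding continuous_within by simp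
qed

lemma vn_bound: "\<bar>vn \<xi>\<bar> \<le> \<bar>uL\<bar> + \<bar>uR\<bar>"
  using vn_range[of \<xi>] by auto

lemma vn_right: "(\<And>v. v \<in> {uL..uR} \<Longrightarrow> f uR \<le> f v) \<Longrightarrow> \<xi> \<ge> 0 \<Longrightarrow> vn \<xi> = uR"
proof -
  assume fm: "\<And>v. v \<in> {uL..uR} \<Longrightarrow> f uR \<le> f v" and xi: "\<xi> \<ge> 0"
  have "val \<xi> n \<le> val \<xi> j" if "j \<le> n" for j
  proof -
    have "f (u n) \<le> f (u j)" using fm[OF u_range[OF that]] un by simp
    moreover have "\<xi> * u j \<le> \<xi> * u n" using u_mono'[OF that] xi by (rule mult_left_mono)
    ultimately show ?thesis unfolding val_def by simp
  qed
  then have "n \<le> idx \<xi>" by (intro idx_greatest) (auto simp: idx_le)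
  then have "idx \<xi> = n" using idx_le[of \<xi>] by simp
  then show ?thesis unfolding vn_def using un by simp
qed

lemma vn_left: "(\<And>v. v \<in> {uL..uR} \<Longrightarrow> f uL \<le> f v) \<Longrightarrow> \<xi> < 0 \<Longrightarrow> vn \<xi> = uL"
proof -
  assume fm: "\<And>v. v \<in> {uL..uR} \<Longrightarrow> f uL \<le> f v" and xi: "\<xi> < 0"
  have "idx \<xi> = 0"
  proof (rule ccontr)
    assume ne: "idx \<xi> \<noteq> 0"
    define j where "j = idx \<xi>"
    have j: "0 < j" "j \<le> n" using ne idx_le unfolding j_def by auto
    have "f (u 0) \<le> f (u j)" using fm[OF u_range[OF j(2)]] u0 by simp
    moreover have "\<xi> * u j < \<xi> * u 0" using u_mono[OF j(1)] xi by (rule mult_strict_left_mono_neg)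
    ultimately have "val \<xi> 0 < val \<xi> j" unfolding val_def by simp
    moreover have "val \<xi> j \<le> val \<xi> 0" unfolding j_def by (rule idx_min) simp
    ultimately show False by simp
  qed
  then show ?thesis unfolding vn_def using u0 by simp
qed

lemma interp_ex:
  assumes k: "k \<in> {uL..uR}"
  shows "\<exists>i \<theta>. i < n \<and> 0 \<le> \<theta> \<and> \<theta> \<le> 1 \<and> k = (1 - \<theta>) * u i + \<theta> * u (Suc i)"
proof -
  define r where "r = (k - uL) / dl"
  have r0: "r \<ge> 0" unfolding r_def using k dl_pos by simp
  have rn: "r \<le> n" unfolding r_def using k dl_pos npos by (simp add: dl_def field_simps)
  define i where "i = min (n - 1) (nat \<lfloor>r\<rfloor>)"
  have i: "i < n" unfolding i_def using npos by simp
  have fl: "real (nat \<lfloor>r\<rfloor>) \<le> r" "r < real (nat \<lfloor>r\<rfloor>) + 1" using r0 by linarith+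
  have ri: "real i \<le> r" unfolding i_def using fl(1) by auto
  have ri1: "r \<le> real i + 1"
  proof (cases "nat \<lfloor>r\<rfloor> \<le> n - 1")
    case True then show ?thesis unfolding i_def using fl(2) by auto
  next
    case False then have "i = n - 1" unfolding i_def by simp
    then show ?thesis using rn npos by simp
  qed
  define \<theta> where "\<theta> = r - real i"
  have "k = uL + r * dl" unfolding r_def using dl_pos by simp
  also have "\<dots> = (1 - \<theta>) * u i + \<theta> * u (Suc i)" unfolding \<theta>_def u_def by (simp add: algebra_simps)
  finally have keq: "k = (1 - \<theta>) * u i + \<theta> * u (Suc i)" .
  have "0 \<le> \<theta>" "\<theta> \<le> 1" using ri ri1 unfolding \<theta>_def by auto
  then show ?thesis using i keq by blast
qed

definition Fint :: "real \<Rightarrow> real" where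
  "Fint k = (if k \<in> {uL..uR} then
     (SOME F. \<exists>i \<theta>. i < n \<and> 0 \<le> \<theta> \<and> \<theta> \<le> 1 \<and> k = (1 - \<theta>) * u i + \<theta> * u (Suc i) \<and> F = (1 - \<theta>) * f (u i) + \<theta> * f (u (Suc i)))
   else f k)"

lemma Fint_prop:
  assumes k: "k \<in> {uL..uR}"
  shows "\<exists>i \<theta>. i < n \<and> 0 \<le> \<theta> \<and> \<theta> \<le> 1 \<and> k = (1 - \<theta>) * u i + \<theta> * u (Suc i) \<and> Fint k = (1 - \<theta>) * f (u i) + \<theta> * f (u (Suc i))"
proof -
  obtain i \<theta> where "i < n \<and> 0 \<le> \<theta> \<and> \<theta> \<le> 1 \<and> k = (1 - \<theta>) * u i + \<theta> * u (Suc i)" using interp_ex[OF k] by blast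
  then have "\<exists>F. \<exists>i \<theta>. i < n \<and> 0 \<le> \<theta> \<and> \<theta> \<le> 1 \<and> k = (1 - \<theta>) * u i + \<theta> * u (Suc i) \<and> F = (1 - \<theta>) * f (u i) + \<theta> * f (u (Suc i))"
    by blast
  from someI_ex[OF this] show ?thesis unfolding Fint_def using k by simp
qed

lemma Fint_sup: "k \<in> {uL..uR} \<Longrightarrow> Fint k - t * k \<ge> mval t"
proof -
  assume k: "k \<in> {uL..uR}"
  obtain i \<theta> where it: "i < n" "0 \<le> \<theta>" "\<theta> \<le> 1" "k = (1 - \<theta>) * u i + \<theta> * u (Suc i)" "Fint k = (1 - \<theta>) * f (u i) + \<theta> * f (u (Suc i))"
    using Fint_prop[OF k] by blast
  have "Fint k - t * k = (1 - \<theta>) * val t i + \<theta> * val t (Suc i)"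
  proof -
    have "t * k = t * ((1 - \<theta>) * u i + \<theta> * u (Suc i))" using it(4) by simp
    also have "\<dots> = (1-\<theta>) * (t * u i) + \<theta> * (t * u (Suc i))" by (simp add: algebra_simps)
    finally have "t * k = (1-\<theta>) * (t * u i) + \<theta> * (t * u (Suc i))" .
    then show ?thesis using it(5) unfolding val_def by (simp add: algebra_simps)
  qed
  also have "\<dots> \<ge> (1 - \<theta>) * mval t + \<theta> * mval t"
    using it mval_le[of i t] mval_le[of "Suc i" t] by (intro add_mono mult_left_mono) auto
  finally show ?thesis by (simp add: algebra_simps)
qed

lemma Fint_near:
  assumes k: "k \<in> {uL..uR}"
  shows "\<exists>a b \<theta>. a \<in> {uL..uR} \<and> b \<in> {uL..uR} \<and> \<bar>a - k\<bar> \<le> dl \<and> \<bar>b - k\<bar> \<le> dl \<and> 0 \<le> \<theta> \<and> \<theta> \<le> 1 \<and> Fint k = (1 - \<theta>) * f a + \<theta> * f b"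
proof -
  obtain i \<theta> where it: "i < n" "0 \<le> \<theta>" "\<theta> \<le> 1" "k = (1 - \<theta>) * u i + \<theta> * u (Suc i)" "Fint k = (1 - \<theta>) * f (u i) + \<theta> * f (u (Suc i))"
    using Fint_prop[OF k] by blast
  have d: "u (Suc i) - u i = dl" using u_diff[of i "Suc i"] by simp
  have "k - u i = \<theta> * dl" using it(4) d by (simp add: algebra_simps)
  moreover have "u (Suc i) - k = (1 - \<theta>) * dl" using it(4) d by (simp add: algebra_simps)
  moreover have "\<theta> * dl \<le> dl" "(1-\<theta>) * dl \<le> dl" "\<theta> * dl \<ge> 0" "(1-\<theta>) * dl \<ge> 0"
    using it(2,3) dl_pos by (auto simp: mult_le_cancel_right1)
  ultimately have "\<bar>u i - k\<bar> \<le> dl" "\<bar>u (Suc i) - k\<bar> \<le> dl" by auto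
  then show ?thesis using it u_range[of i] u_range[of "Suc i"]
    by (intro exI[of _ "u i"] exI[of _ "u (Suc i)"] exI[of _ \<theta>]) auto
qed

lemma Tn_nonneg:
  assumes tf: "testf phi phit phix" and Fc: "\<And>t. k \<in> {uL..uR} \<Longrightarrow> F - t * k \<ge> mval t"
  shows "0 \<le> PI (\<lambda>p. \<bar>vn (snd p / fst p) - k\<bar> * phit p + sgn (vn (snd p / fst p) - k) * (f (vn (snd p / fst p)) - F) * phix p)
          + (\<integral>x. \<bar>(if x < 0 then uL else uR) - k\<bar> * phi (0, x) \<partial>lborel)"
proof -
  define eta where "eta v = \<bar>v - k\<bar>" for v
  define G where "G v = sgn (v - k) * (f v - F)" for v
  define K where "K t = PI (\<lambda>(t',x). indicator {t * t'..} x * phix (t',x))" for t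
  define C where "C i = G (u i) - G (u (i-1)) - tau i * (eta (u i) - eta (u (i-1)))" for i
  have K: "K t \<le> 0" for t unfolding K_def by (rule testf.PI_x_half[OF tf])
  have "PI (\<lambda>p. eta (u (idx (snd p / fst p))) * phit p + G (u (idx (snd p / fst p))) * phix p)
     + (\<integral>x. eta (if x < 0 then u 0 else u n) * phi (0, x) \<partial>lborel)
   = (\<Sum>i\<in>{1..n}. C i * K (tau i))"
    unfolding C_def K_def by (rule testf.fan_identity[OF tf idx_le tau_iff])
  moreover have "(\<lambda>p. eta (u (idx (snd p / fst p))) * phit p + G (u (idx (snd p / fst p))) * phix p)
     = (\<lambda>p. \<bar>vn (snd p / fst p) - k\<bar> * phit p + sgn (vn (snd p / fst p) - k) * (f (vn (snd p / fst p)) - F) * phix p)"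
    unfolding eta_def G_def vn_def by (simp add: fun_eq_iff)
  moreover have "(\<lambda>x. eta (if x < 0 then u 0 else u n) * phi (0, x)) = (\<lambda>x. \<bar>(if x < 0 then uL else uR) - k\<bar> * phi (0, x))"
    unfolding eta_def u0 un by simp
  moreover have "(\<Sum>i\<in>{1..n}. C i * K (tau i)) \<ge> 0"
  proof -
    have "(\<Sum>i\<in>{1..n}. C i * K (tau i)) = (\<Sum>t0\<in>tau ` {1..n}. \<Sum>i\<in>{i\<in>{1..n}. tau i = t0}. C i * K (tau i))"
      by (rule sum.image_gen) simp
    also have "\<dots> = (\<Sum>t0\<in>tau ` {1..n}. K t0 * (\<Sum>i\<in>{i\<in>{1..n}. tau i = t0}. C i))"
      by (intro sum.cong refl) (auto simp: sum_distrib_left mult.commute intro!: sum.cong)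
    also have "\<dots> \<ge> 0"
    proof (rule sum_nonneg)
      fix t0 assume t0: "t0 \<in> tau ` {1..n}"
      have "0 \<le> (\<Sum>i\<in>{i\<in>{1..n}. tau i = t0}. tau i * (\<bar>u i - k\<bar> - \<bar>u (i-1) - k\<bar>)
            - (sgn (u i - k) * (f (u i) - F) - sgn (u (i-1) - k) * (f (u (i-1)) - F)))"
        by (rule group_nonneg[OF Fc t0])
      also have "\<dots> = - (\<Sum>i\<in>{i\<in>{1..n}. tau i = t0}. C i)"
        unfolding C_def eta_def G_def by (simp add: sum_negf[symmetric] algebra_simps)
      finally have "(\<Sum>i\<in>{i\<in>{1..n}. tau i = t0}. C i) \<le> 0" by simp
      then show "0 \<le> K t0 * (\<Sum>i\<in>{i\<in>{1..n}. tau i = t0}. C i)" using K[of t0] by (simp add: mult_nonpos_nonpos)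
    qed
    finally show ?thesis .
  qed
  ultimately show ?thesis by simp
qed

end

lemma ae_cont_ray:
  fixes L :: "real \<Rightarrow> real"
  assumes "mono L"
  shows "AE p in lborel. fst p > 0 \<longrightarrow> isCont L (snd p / fst p)"
proof -
  define D where "D = {a. \<not> isCont L a}"
  have cD: "countable D" unfolding D_def by (rule mono_ctble_discont[OF assms])
  have Dnull: "D \<in> null_sets lborel" by (rule countable_imp_null_set_lborel[OF cD])
  have Dsets: "D \<in> sets borel" using null_setsD2[OF Dnull] by simp
  have meas: "{x\<in>space (lborel \<Otimes>\<^sub>M lborel). (\<lambda>t x. t > 0 \<longrightarrow> isCont L (x / t)) (fst x) (snd x)} \<in> sets (lborel \<Otimes>\<^sub>M lborel)"
  proof -
    have "{x\<in>space (lborel \<Otimes>\<^sub>M lborel). (\<lambda>t x. t > 0 \<longrightarrow> isCont L (x / t)) (fst x) (snd x)}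
       = {p::real\<times>real. fst p \<le> 0} \<union> ((\<lambda>p. snd p / fst p) -` (- D))"
      by (auto simp: D_def space_pair_measure)
    moreover have "{p::real\<times>real. fst p \<le> 0} \<in> sets borel"
      by (intro borel_closed closed_Collect_le) (auto intro!: continuous_intros)
    moreover have "(\<lambda>p::real\<times>real. snd p / fst p) -` (- D) \<in> sets borel"
    proof -
      have c1: "(\<lambda>p::real\<times>real. fst p) \<in> borel_measurable borel"
        by (rule borel_measurable_continuous_onI) (auto intro!: continuous_intros)
      have c2: "(\<lambda>p::real\<times>real. snd p) \<in> borel_measurable borel"
        by (rule borel_measurable_continuous_onI) (auto intro!: continuous_intros)
      have m: "(\<lambda>p::real\<times>real. snd p / fst p) \<in> borel_measurable borel"
        by (rule borel_measurable_divide[OF c2 c1])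
      have "- D = space borel - D" by (simp add: Compl_eq_Diff_UNIV)
      then have "- D \<in> sets borel" using sets.compl_sets[OF Dsets] by simp
      from measurable_sets[OF m this] show ?thesis by simp
    qed
    moreover have "sets (lborel \<Otimes>\<^sub>M lborel) = sets (borel :: (real\<times>real) measure)"
      by (simp only: lborel_prod sets_lborel)
    ultimately show ?thesis by (metis sets.Un)
  qed
  have "AE t in lborel. AE x in lborel. t > 0 \<longrightarrow> isCont L (x / t)"
  proof (rule AE_I2)
    fix t :: real
    show "AE x in lborel. t > 0 \<longrightarrow> isCont L (x / t)"
    proof (cases "t > 0")
      case True
      have "countable ((\<lambda>a. t * a) ` D)" using cD by simp
      then have "AE x in lborel. x \<notin> (\<lambda>a. t * a) ` D"
        by (intro AE_not_in countable_imp_null_set_lborel)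
      then show ?thesis
      proof (rule AE_mp[OF _ AE_I2], intro impI)
        fix x assume "x \<notin> (\<lambda>a. t * a) ` D"
        then have "x / t \<notin> D" using True by (auto simp: image_iff)
        then show "isCont L (x / t)" unfolding D_def by simp
      qed
    qed simp
  qed
  then have "AE p in lborel \<Otimes>\<^sub>M lborel. fst p > 0 \<longrightarrow> isCont L (snd p / fst p)"
    using lborel_pair.AE_pair_iff[OF meas] by simp
  then show ?thesis by (simp only: lborel_prod)
qed

lemma bsupp_abs: "bsupp g \<Longrightarrow> bsupp (\<lambda>p. \<bar>g p\<bar>)"
  unfolding bsupp_def by auto

locale lim_setup =
  fixes uL uR :: real and f :: "real \<Rightarrow> real"
  assumes lr: "uL < uR" and fc: "continuous_on {uL..uR} f"
begin

lemma gr: "grid uL uR (Suc m)"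
  by unfold_locales (use lr in auto)

definition V :: "nat \<Rightarrow> real \<Rightarrow> real" where "V m = grid.vn uL uR (Suc m) f"
definition Fi :: "nat \<Rightarrow> real \<Rightarrow> real" where "Fi m = grid.Fint uL uR (Suc m) f"
definition clamp :: "real \<Rightarrow> real" where "clamp v = max uL (min uR v)"
definition fcl :: "real \<Rightarrow> real" where "fcl v = f (clamp v)"

lemma clamp_range: "clamp v \<in> {uL..uR}" unfolding clamp_def using lr by auto
lemma clamp_id: "v \<in> {uL..uR} \<Longrightarrow> clamp v = v" unfolding clamp_def by auto
lemma clamp_cont: "continuous_on UNIV clamp" unfolding clamp_def by (intro continuous_intros)

lemma fcl_cont: "continuous_on UNIV fcl"
  unfolding fcl_def by (rule continuous_on_compose2[OF fc clamp_cont]) (use clamp_range in auto)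

lemma fcl_eq: "v \<in> {uL..uR} \<Longrightarrow> fcl v = f v" unfolding fcl_def by (simp add: clamp_id)

lemma V_range: "V m \<xi> \<in> {uL..uR}" unfolding V_def by (rule grid.vn_range[OF gr])

lemma Mf_ex: "\<exists>Mf. \<forall>v\<in>{uL..uR}. \<bar>f v\<bar> \<le> Mf"
proof -
  have "compact (f ` {uL..uR})" by (rule compact_continuous_image[OF fc]) simp
  then have "bounded (f ` {uL..uR})" by (rule compact_imp_bounded)
  then show ?thesis unfolding bounded_iff by auto
qed

lemma cc_abs: "0 \<le> \<theta> \<Longrightarrow> \<theta> \<le> 1 \<Longrightarrow> \<bar>(1 - \<theta>) * x + \<theta> * y\<bar> \<le> (1 - \<theta>) * \<bar>x\<bar> + \<theta> * \<bar>(y::real)\<bar>"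
proof -
  assume t: "0 \<le> \<theta>" "\<theta> \<le> 1"
  have "\<bar>(1 - \<theta>) * x + \<theta> * y\<bar> \<le> \<bar>(1 - \<theta>) * x\<bar> + \<bar>\<theta> * y\<bar>" by (rule abs_triangle_ineq)
  also have "\<bar>(1 - \<theta>) * x\<bar> = (1 - \<theta>) * \<bar>x\<bar>" using t by (simp add: abs_mult)
  also have "\<bar>\<theta> * y\<bar> = \<theta> * \<bar>y\<bar>" using t by (simp add: abs_mult)
  finally show ?thesis .
qed

lemma cc_le: "0 \<le> \<theta> \<Longrightarrow> \<theta> \<le> 1 \<Longrightarrow> A \<le> M \<Longrightarrow> B \<le> M \<Longrightarrow> (1 - \<theta>) * A + \<theta> * B \<le> (M::real)"
proof -
  assume t: "0 \<le> \<theta>" "\<theta> \<le> 1" and AB: "A \<le> M" "B \<le> M"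
  have "(1 - \<theta>) * A \<le> (1 - \<theta>) * M" using t AB by (intro mult_left_mono) auto
  moreover have "\<theta> * B \<le> \<theta> * M" using t AB by (intro mult_left_mono) auto
  ultimately have "(1 - \<theta>) * A + \<theta> * B \<le> (1 - \<theta>) * M + \<theta> * M" by simp
  also have "\<dots> = M" by (simp add: algebra_simps)
  finally show ?thesis .
qed

lemma Fi_bound: "\<forall>v\<in>{uL..uR}. \<bar>f v\<bar> \<le> Mf \<Longrightarrow> \<bar>Fi m k\<bar> \<le> Mf + \<bar>f k\<bar>"
proof -
  assume Mf: "\<forall>v\<in>{uL..uR}. \<bar>f v\<bar> \<le> Mf"
  have M0: "Mf \<ge> 0" using Mf lr by (meson abs_ge_zero atLeastAtMost_iff less_imp_le order.trans order_refl)
  show ?thesis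
  proof (cases "k \<in> {uL..uR}")
    case True
    obtain a b \<theta> where ab: "a \<in> {uL..uR}" "b \<in> {uL..uR}" "0 \<le> \<theta>" "\<theta> \<le> 1" "Fi m k = (1 - \<theta>) * f a + \<theta> * f b"
      using grid.Fint_near[OF gr True] unfolding Fi_def by blast
    have "\<bar>Fi m k\<bar> \<le> (1 - \<theta>) * \<bar>f a\<bar> + \<theta> * \<bar>f b\<bar>" unfolding ab(5) by (rule cc_abs[OF ab(3,4)])
    also have "\<dots> \<le> Mf" using ab Mf by (intro cc_le) auto
    finally show ?thesis by simp
  next
    case False
    then have "Fi m k = f k" unfolding Fi_def grid.Fint_def[OF gr] by (subst if_not_P[OF False]) (rule refl)
    then show ?thesis using M0 by simp
  qed
qed

lemma Fi_lim: "(\<lambda>m. Fi m k) \<longlonglongrightarrow> f k"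
proof (cases "k \<in> {uL..uR}")
  case False
  then have "Fi m k = f k" for m unfolding Fi_def grid.Fint_def[OF gr] by (subst if_not_P[OF False]) (rule refl)
  then show ?thesis by simp
next
  case k: True
  show ?thesis
  proof (rule LIMSEQ_I)
    fix r :: real assume r: "r > 0"
    have "isCont fcl k" using fcl_cont by (simp add: continuous_on_eq_continuous_at)
    then obtain d where d: "d > 0" "\<And>v. \<bar>v - k\<bar> < d \<Longrightarrow> \<bar>fcl v - fcl k\<bar> < r / 2"
      using r unfolding continuous_at_eps_delta dist_real_def by (metis half_gt_zero)
    obtain N :: nat where N: "(uR - uL) / d < real N" using reals_Archimedean2 by blast
    have "norm (Fi m k - f k) < r" if m: "m \<ge> N" for m
    proof -
      have dm: "(uR - uL) / real (Suc m) < d"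
      proof -
        have "(uR - uL) < d * real N" using N d(1) by (simp add: field_simps)
        also have "\<dots> \<le> d * real (Suc m)" using m d(1) by simp
        finally show ?thesis using lr by (simp add: field_simps)
      qed
      obtain a b \<theta> where ab: "a \<in> {uL..uR}" "b \<in> {uL..uR}" "\<bar>a - k\<bar> \<le> (uR - uL) / real (Suc m)"
        "\<bar>b - k\<bar> \<le> (uR - uL) / real (Suc m)" "0 \<le> \<theta>" "\<theta> \<le> 1" "Fi m k = (1 - \<theta>) * f a + \<theta> * f b"
        using grid.Fint_near[OF gr k] unfolding Fi_def grid.dl_def[OF gr] by blast
      have "\<bar>a - k\<bar> < d" using ab(3) dm by linarith
      then have "\<bar>fcl a - fcl k\<bar> < r / 2" by (rule d(2))
      then have A: "\<bar>f a - f k\<bar> \<le> r / 2" using fcl_eq[OF ab(1)] fcl_eq[OF k] by simp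
      have "\<bar>b - k\<bar> < d" using ab(4) dm by linarith
      then have "\<bar>fcl b - fcl k\<bar> < r / 2" by (rule d(2))
      then have B: "\<bar>f b - f k\<bar> \<le> r / 2" using fcl_eq[OF ab(2)] fcl_eq[OF k] by simp
      have "Fi m k - f k = (1 - \<theta>) * (f a - f k) + \<theta> * (f b - f k)" using ab(7) by (simp add: algebra_simps)
      then have "\<bar>Fi m k - f k\<bar> \<le> (1 - \<theta>) * \<bar>f a - f k\<bar> + \<theta> * \<bar>f b - f k\<bar>"
        using cc_abs[OF ab(5,6)] by simp
      also have "\<dots> \<le> r / 2" using ab(5,6) A B by (rule cc_le)
      finally show ?thesis using r by simp
    qed
    then show "\<exists>no. \<forall>m\<ge>no. norm (Fi m k - f k) < r" by blast
  qed
qed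

end

context lim_setup
begin

lemma m_xi: "(\<lambda>p::real\<times>real. snd p / fst p) \<in> borel_measurable borel"
proof -
  have c1: "(\<lambda>p::real\<times>real. fst p) \<in> borel_measurable borel"
    by (rule borel_measurable_continuous_onI) (auto intro!: continuous_intros)
  have c2: "(\<lambda>p::real\<times>real. snd p) \<in> borel_measurable borel"
    by (rule borel_measurable_continuous_onI) (auto intro!: continuous_intros)
  show ?thesis by (rule borel_measurable_divide[OF c2 c1])
qed

lemma m_fcl: "fcl \<in> borel_measurable borel"
  by (rule borel_measurable_continuous_onI[OF fcl_cont])

lemma m_clamp: "clamp \<in> borel_measurable borel"
  by (rule borel_measurable_continuous_onI[OF clamp_cont])

lemma m_mono_comp: "mono (g :: real \<Rightarrow> real) \<Longrightarrow> (\<lambda>p::real\<times>real. g (snd p / fst p)) \<in> borel_measurable borel"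
  using measurable_compose[OF m_xi borel_measurable_mono] by (simp add: o_def)

lemma V_mono: "mono (V m)" unfolding V_def by (rule grid.vn_mono[OF gr])

lemma m_integrand:
  fixes a :: "real\<times>real \<Rightarrow> real" and c k :: real and phit phix :: "real\<times>real \<Rightarrow> real"
  assumes a: "a \<in> borel_measurable borel" and ar: "\<And>p. a p \<in> {uL..uR}"
    and pt: "phit \<in> borel_measurable borel" and px: "phix \<in> borel_measurable borel"
  shows "(\<lambda>p. \<bar>a p - k\<bar> * phit p + sgn (a p - k) * (f (a p) - c) * phix p) \<in> borel_measurable borel"
proof -
  have e: "(\<lambda>p. \<bar>a p - k\<bar> * phit p + sgn (a p - k) * (f (a p) - c) * phix p) = (\<lambda>p. \<bar>a p - k\<bar> * phit p + sgn (a p - k) * (fcl (a p) - c) * phix p)"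
    using ar fcl_eq by (simp add: fun_eq_iff)
  have fa: "(\<lambda>p. fcl (a p)) \<in> borel_measurable borel" using measurable_compose[OF a m_fcl] by (simp add: o_def)
  have sa: "(\<lambda>p. sgn (a p - k)) \<in> borel_measurable borel"
    using measurable_compose[OF borel_measurable_diff[OF a borel_measurable_const] borel_measurable_sgn] by (simp add: o_def)
  show ?thesis unfolding e
    by (intro borel_measurable_add borel_measurable_times borel_measurable_abs borel_measurable_diff a fa sa pt px borel_measurable_const)
qed

lemma fan_sol:
  "\<exists>w. kruzhkov_solution f (\<lambda>x. if x < 0 then uL else uR) w \<and>
     ((\<forall>v\<in>{uL..uR}. f uR \<le> f v) \<longrightarrow> (AE p in lborel. fst p > 0 \<longrightarrow> snd p > 0 \<longrightarrow> w p = uR)) \<and>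
     ((\<forall>v\<in>{uL..uR}. f uL \<le> f v) \<longrightarrow> (AE p in lborel. fst p > 0 \<longrightarrow> snd p < 0 \<longrightarrow> w p = uL))"
proof -
  define M where "M = \<bar>uL\<bar> + \<bar>uR\<bar>"
  have rc: "\<And>m x. continuous (at_right x) (V m)" unfolding V_def by (rule grid.vn_rcont[OF gr])
  have mo: "\<And>m. mono (V m)" by (rule V_mono)
  have bd: "\<And>m x. \<bar>V m x\<bar> \<le> M" unfolding V_def M_def by (rule grid.vn_bound[OF gr])
  obtain s Lf where s: "strict_mono s" and Lmono: "mono Lf"
    and Llim: "\<And>x. isCont Lf x \<Longrightarrow> (\<lambda>j. V (s j) x) \<longlonglongrightarrow> Lf x"
    using Helly_selection[where f=V and M=M, OF rc mo bd] by blast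
  have Lrange: "Lf x \<in> {uL..uR}" if "isCont Lf x" for x
  proof -
    have l: "(\<lambda>j. V (s j) x) \<longlonglongrightarrow> Lf x" using Llim[OF that] .
    have "uL \<le> Lf x" by (rule LIMSEQ_le_const[OF l]) (use V_range in auto)
    moreover have "Lf x \<le> uR" by (rule LIMSEQ_le_const2[OF l]) (use V_range in auto)
    ultimately show ?thesis by simp
  qed
  define w where "w p = clamp (Lf (snd p / fst p))" for p :: "real \<times> real"
  have wr: "w p \<in> {uL..uR}" for p unfolding w_def by (rule clamp_range)
  have AEc: "AE p in lborel. fst p > 0 \<longrightarrow> isCont Lf (snd p / fst p)" by (rule ae_cont_ray[OF Lmono])
  have wlim: "(\<lambda>j. V (s j) (snd p / fst p)) \<longlonglongrightarrow> w p" if "isCont Lf (snd p / fst p)" for p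
    using Llim[OF that] clamp_id[OF Lrange[OF that]] unfolding w_def by simp
  have mw: "w \<in> borel_measurable borel"
  proof -
    have "(\<lambda>p::real\<times>real. Lf (snd p / fst p)) \<in> borel_measurable borel" by (rule m_mono_comp[OF Lmono])
    from measurable_compose[OF this m_clamp] show ?thesis unfolding w_def by (simp add: o_def)
  qed
  have kr: "kruzhkov_solution f (\<lambda>x. if x < 0 then uL else uR) w"
    unfolding kruzhkov_solution_def
  proof (intro conjI allI impI)
    show "w \<in> borel_measurable lborel" using mw by simp
    show "\<exists>M. \<forall>t x. t > 0 \<longrightarrow> \<bar>w (t, x)\<bar> \<le> M"
    proof (intro exI[of _ M] allI impI)
      fix t x :: real
      have "w (t,x) \<in> {uL..uR}" by (rule wr)
      then show "\<bar>w (t, x)\<bar> \<le> M" unfolding M_def by auto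
    qed
    fix k :: real and phi phit phix :: "real \<times> real \<Rightarrow> real"
    assume tfa: "test_fun phi phit phix"
    then interpret testf phi phit phix by unfold_locales
    have tf: "testf phi phit phix" by unfold_locales
    define hj where "hj j = (\<lambda>p. \<bar>V (s j) (snd p / fst p) - k\<bar> * phit p + sgn (V (s j) (snd p / fst p) - k) * (f (V (s j) (snd p / fst p)) - Fi (s j) k) * phix p)" for j
    define h where "h = (\<lambda>p. \<bar>w p - k\<bar> * phit p + sgn (w p - k) * (f (w p) - f k) * phix p)"
    define I0 where "I0 = (\<integral>x. \<bar>(if x < 0 then uL else uR) - k\<bar> * phi (0, x) \<partial>lborel)"
    have Tj: "0 \<le> PI (hj j) + I0" for j
      using grid.Tn_nonneg[OF gr tf grid.Fint_sup[OF gr]] unfolding hj_def V_def Fi_def I0_def by simp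
    obtain Mf where Mf: "\<forall>v\<in>{uL..uR}. \<bar>f v\<bar> \<le> Mf" using Mf_ex by blast
    define B1 where "B1 = M + \<bar>k\<bar>"
    define B2 where "B2 = 2 * Mf + \<bar>f k\<bar>"
    define A where "A = ({0<..} \<times> UNIV :: (real \<times> real) set)"
    define bnd where "bnd p = indicator A p * (B1 * \<bar>phit p\<bar> + B2 * \<bar>phix p\<bar>)" for p
    have mpt: "phit \<in> borel_measurable borel" using bsupp_t unfolding bsupp_def by simp
    have mpx: "phix \<in> borel_measurable borel" using bsupp_x unfolding bsupp_def by simp
    have conv: "(\<lambda>j. PI (hj j)) \<longlonglongrightarrow> PI h"
      unfolding PI_def set_lebesgue_integral_def A_def[symmetric]
    proof (rule integral_dominated_convergence[where w=bnd])
      show "(\<lambda>p. indicator A p *\<^sub>R h p) \<in> borel_measurable lborel"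
        unfolding h_def using half_borel m_integrand[OF mw wr mpt mpx] unfolding A_def by simp
      show "(\<lambda>p. indicator A p *\<^sub>R hj j p) \<in> borel_measurable lborel" for j
        unfolding hj_def using half_borel m_integrand[OF m_mono_comp[OF V_mono] V_range mpt mpx] unfolding A_def by simp
      show "integrable lborel bnd" unfolding bnd_def A_def
        by (intro bsupp_integrable bsupp_ind[OF half_borel] bsupp_add bsupp_cmult bsupp_abs bsupp_t bsupp_x)
      show "AE p in lborel. norm (indicator A p *\<^sub>R hj j p) \<le> bnd p" for j
      proof (rule AE_I2)
        fix p :: "real \<times> real"
        define v where "v = V (s j) (snd p / fst p)"
        have v: "v \<in> {uL..uR}" unfolding v_def by (rule V_range)
        have b1: "\<bar>v - k\<bar> \<le> B1" using v unfolding B1_def M_def by auto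
        have fv: "\<bar>f v\<bar> \<le> Mf" using Mf v by blast
        have fF: "\<bar>Fi (s j) k\<bar> \<le> Mf + \<bar>f k\<bar>" by (rule Fi_bound[OF Mf])
        have "\<bar>f v - Fi (s j) k\<bar> \<le> \<bar>f v\<bar> + \<bar>Fi (s j) k\<bar>" by (rule abs_triangle_ineq4)
        also have "\<dots> \<le> B2" using fv fF unfolding B2_def by linarith
        finally have b2': "\<bar>f v - Fi (s j) k\<bar> \<le> B2" .
        have "\<bar>sgn (v - k) * (f v - Fi (s j) k)\<bar> = \<bar>sgn (v - k)\<bar> * \<bar>f v - Fi (s j) k\<bar>" by (rule abs_mult)
        also have "\<dots> \<le> 1 * \<bar>f v - Fi (s j) k\<bar>" by (intro mult_right_mono) (auto simp: abs_sgn_eq)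
        finally have b2: "\<bar>sgn (v - k) * (f v - Fi (s j) k)\<bar> \<le> B2" using b2' by simp
        have "\<bar>hj j p\<bar> = \<bar>\<bar>v - k\<bar> * phit p + (sgn (v - k) * (f v - Fi (s j) k)) * phix p\<bar>"
          unfolding hj_def v_def by (simp add: mult.assoc)
        also have "\<dots> \<le> \<bar>\<bar>v - k\<bar> * phit p\<bar> + \<bar>(sgn (v - k) * (f v - Fi (s j) k)) * phix p\<bar>" by (rule abs_triangle_ineq)
        also have "\<dots> = \<bar>v - k\<bar> * \<bar>phit p\<bar> + \<bar>sgn (v - k) * (f v - Fi (s j) k)\<bar> * \<bar>phix p\<bar>" by (simp add: abs_mult)
        also have "\<dots> \<le> B1 * \<bar>phit p\<bar> + B2 * \<bar>phix p\<bar>"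
          using b1 b2 by (intro add_mono mult_right_mono) auto
        finally have "\<bar>hj j p\<bar> \<le> B1 * \<bar>phit p\<bar> + B2 * \<bar>phix p\<bar>" .
        then show "norm (indicator A p *\<^sub>R hj j p) \<le> bnd p" unfolding bnd_def by (simp add: indicator_def)
      qed
      show "AE p in lborel. (\<lambda>j. indicator A p *\<^sub>R hj j p) \<longlonglongrightarrow> indicator A p *\<^sub>R h p"
        using AEc
      proof (rule AE_mp[OF _ AE_I2], intro impI)
        fix p :: "real \<times> real" assume pc: "fst p > 0 \<longrightarrow> isCont Lf (snd p / fst p)"
        show "(\<lambda>j. indicator A p *\<^sub>R hj j p) \<longlonglongrightarrow> indicator A p *\<^sub>R h p"
        proof (cases "fst p > 0")
          case False then have "p \<notin> A" unfolding A_def by (cases p) auto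
          then show ?thesis by simp
        next
          case True
          then have pA: "p \<in> A" unfolding A_def by (cases p) auto
          define a where "a j = V (s j) (snd p / fst p)" for j
          have al: "a \<longlonglongrightarrow> w p" unfolding a_def using wlim pc True by simp
          have ar: "a j \<in> {uL..uR}" for j unfolding a_def by (rule V_range)
          have fa: "(\<lambda>j. f (a j)) \<longlonglongrightarrow> f (w p)"
          proof -
            have "isCont fcl (w p)" using fcl_cont by (simp add: continuous_on_eq_continuous_at)
            then have "(\<lambda>j. fcl (a j)) \<longlonglongrightarrow> fcl (w p)" using al by (rule isCont_tendsto_compose)
            then show ?thesis using fcl_eq ar wr by simp
          qed
          have Fl: "(\<lambda>j. Fi (s j) k) \<longlonglongrightarrow> f k"
            using LIMSEQ_subseq_LIMSEQ[OF Fi_lim s] by (simp add: o_def)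
          have t1: "(\<lambda>j. \<bar>a j - k\<bar> * phit p) \<longlonglongrightarrow> \<bar>w p - k\<bar> * phit p"
            using al by (intro tendsto_intros)
          have t2: "(\<lambda>j. sgn (a j - k) * (f (a j) - Fi (s j) k)) \<longlonglongrightarrow> sgn (w p - k) * (f (w p) - f k)"
          proof (cases "w p = k")
            case False
            then show ?thesis using al fa Fl by (intro tendsto_intros) auto
          next
            case True
            have "(\<lambda>j. \<bar>f (a j) - Fi (s j) k\<bar>) \<longlonglongrightarrow> \<bar>f (w p) - f k\<bar>" using fa Fl by (intro tendsto_intros)
            then have z: "(\<lambda>j. \<bar>f (a j) - Fi (s j) k\<bar>) \<longlonglongrightarrow> 0" using True by simp
            have "(\<lambda>j. sgn (a j - k) * (f (a j) - Fi (s j) k)) \<longlonglongrightarrow> 0"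
            proof (rule Lim_null_comparison[OF _ z])
              show "eventually (\<lambda>j. norm (sgn (a j - k) * (f (a j) - Fi (s j) k)) \<le> \<bar>f (a j) - Fi (s j) k\<bar>) sequentially"
                by (intro always_eventually allI) (simp add: abs_mult abs_sgn_eq)
            qed
            then show ?thesis using True by simp
          qed
          have e: "(\<lambda>j. hj j p) = (\<lambda>j. \<bar>a j - k\<bar> * phit p + (sgn (a j - k) * (f (a j) - Fi (s j) k)) * phix p)"
            unfolding hj_def a_def by (simp add: fun_eq_iff mult.assoc)
          have e2: "h p = \<bar>w p - k\<bar> * phit p + (sgn (w p - k) * (f (w p) - f k)) * phix p"
            unfolding h_def by (simp add: mult.assoc)
          have "(\<lambda>j. hj j p) \<longlonglongrightarrow> h p"
            unfolding e e2 by (rule tendsto_add[OF t1 tendsto_mult[OF t2 tendsto_const]])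
          then show ?thesis using pA by simp
        qed
      qed
    qed
    then have "(\<lambda>j. PI (hj j) + I0) \<longlonglongrightarrow> PI h + I0" by (intro tendsto_intros)
    then have "0 \<le> PI h + I0" by (rule LIMSEQ_le_const) (use Tj in auto)
    then show "0 \<le> (LINT p:{0<..} \<times> UNIV|lborel. \<bar>w p - k\<bar> * phit p + sgn (w p - k) * (f (w p) - f k) * phix p) +
          (LINT x|lborel. \<bar>(if x < 0 then uL else uR) - k\<bar> * phi (0, x))"
      unfolding PI_def h_def I0_def by simp
  qed
  have P1: "AE p in lborel. fst p > 0 \<longrightarrow> snd p > 0 \<longrightarrow> w p = uR" if fm: "\<forall>v\<in>{uL..uR}. f uR \<le> f v"
    using AEc
  proof (rule AE_mp[OF _ AE_I2], intro impI)
    fix p :: "real \<times> real" assume pc: "fst p > 0 \<longrightarrow> isCont Lf (snd p / fst p)" and t: "fst p > 0" and x: "snd p > 0"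
    have "V (s j) (snd p / fst p) = uR" for j
      unfolding V_def by (rule grid.vn_right[OF gr]) (use fm t x in auto)
    then have "(\<lambda>j. V (s j) (snd p / fst p)) \<longlonglongrightarrow> uR" by simp
    moreover have "(\<lambda>j. V (s j) (snd p / fst p)) \<longlonglongrightarrow> w p" using wlim pc t by simp
    ultimately show "w p = uR" using LIMSEQ_unique by blast
  qed
  have P2: "AE p in lborel. fst p > 0 \<longrightarrow> snd p < 0 \<longrightarrow> w p = uL" if fm: "\<forall>v\<in>{uL..uR}. f uL \<le> f v"
    using AEc
  proof (rule AE_mp[OF _ AE_I2], intro impI)
    fix p :: "real \<times> real" assume pc: "fst p > 0 \<longrightarrow> isCont Lf (snd p / fst p)" and t: "fst p > 0" and x: "snd p < 0"
    have "V (s j) (snd p / fst p) = uL" for j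
      unfolding V_def by (rule grid.vn_left[OF gr]) (use fm t x in \<open>auto simp: divide_neg_pos\<close>)
    then have "(\<lambda>j. V (s j) (snd p / fst p)) \<longlonglongrightarrow> uL" by simp
    moreover have "(\<lambda>j. V (s j) (snd p / fst p)) \<longlonglongrightarrow> w p" using wlim pc t by simp
    ultimately show "w p = uL" using LIMSEQ_unique by blast
  qed
  show ?thesis using kr P1 P2 by blast
qed

end

lemma kruzhkov_const: "kruzhkov_solution f (\<lambda>x. if x < 0 then c else c) (\<lambda>p. c)"
  unfolding kruzhkov_solution_def
proof (intro conjI allI impI)
  show "(\<lambda>p. c) \<in> borel_measurable lborel" by simp
  show "\<exists>M. \<forall>t x. t > 0 \<longrightarrow> \<bar>c\<bar> \<le> M" by auto
  fix k :: real and phi phit phix :: "real \<times> real \<Rightarrow> real"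
  assume "test_fun phi phit phix"
  then interpret testf phi phit phix by unfold_locales
  have "PI (\<lambda>p. \<bar>c - k\<bar> * phit p + sgn (c - k) * (f c - f k) * phix p) = \<bar>c - k\<bar> * PI phit + (sgn (c - k) * (f c - f k)) * PI phix"
    using PI_add[OF bsupp_cmult[OF bsupp_t] bsupp_cmult[OF bsupp_x], of "\<bar>c - k\<bar>" "sgn (c - k) * (f c - f k)"]
    by (simp add: PI_cmult)
  also have "\<dots> = - \<bar>c - k\<bar> * (\<integral>x. phi (0, x) \<partial>lborel)" using PI_t PI_x by simp
  finally have "PI (\<lambda>p. \<bar>c - k\<bar> * phit p + sgn (c - k) * (f c - f k) * phix p) = - \<bar>c - k\<bar> * (\<integral>x. phi (0, x) \<partial>lborel)" .
  then show "0 \<le> (LINT p:{0<..} \<times> UNIV|lborel. \<bar>c - k\<bar> * phit p + sgn (c - k) * (f c - f k) * phix p) +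
          (LINT x|lborel. \<bar>(if x < 0 then c else c) - k\<bar> * phi (0, x))"
    unfolding PI_def by simp
qed

lemma kruzhkov_reflect:
  assumes "kruzhkov_solution (\<lambda>u. - f (- u)) (\<lambda>x. if x < 0 then - a else - b) w"
  shows "kruzhkov_solution f (\<lambda>x. if x < 0 then a else b) (\<lambda>p. - w p)"
  unfolding kruzhkov_solution_def
proof (intro conjI allI impI)
  show "(\<lambda>p. - w p) \<in> borel_measurable lborel" using assms unfolding kruzhkov_solution_def by simp
  obtain M where "\<forall>t x. t > 0 \<longrightarrow> \<bar>w (t, x)\<bar> \<le> M" using assms unfolding kruzhkov_solution_def by blast
  then show "\<exists>M. \<forall>t x. t > 0 \<longrightarrow> \<bar>- w (t, x)\<bar> \<le> M" by auto
  fix k :: real and phi phit phix :: "real \<times> real \<Rightarrow> real"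
  assume tf: "test_fun phi phit phix"
  have H: "0 \<le> (LINT p:{0<..} \<times> UNIV|lborel. \<bar>w p - (-k)\<bar> * phit p + sgn (w p - (-k)) * ((- f (- w p)) - (- f (- (-k)))) * phix p) +
          (LINT x|lborel. \<bar>(if x < 0 then - a else - b) - (-k)\<bar> * phi (0, x))"
    using assms tf unfolding kruzhkov_solution_def by blast
  have e1: "(\<lambda>p. \<bar>w p - (-k)\<bar> * phit p + sgn (w p - (-k)) * ((- f (- w p)) - (- f (- (-k)))) * phix p)
      = (\<lambda>p. \<bar>- w p - k\<bar> * phit p + sgn (- w p - k) * (f (- w p) - f k) * phix p)"
  proof (rule ext)
    fix p
    have "\<bar>w p - (-k)\<bar> = \<bar>- w p - k\<bar>" by linarith
    moreover have "sgn (w p - (-k)) * ((- f (- w p)) - (- f (- (-k)))) = sgn (- w p - k) * (f (- w p) - f k)"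
    proof -
      have "sgn (- w p - k) = - sgn (w p - (-k))" using sgn_minus[of "w p + k"] by simp
      then show ?thesis by (simp add: algebra_simps)
    qed
    ultimately show "\<bar>w p - (-k)\<bar> * phit p + sgn (w p - (-k)) * ((- f (- w p)) - (- f (- (-k)))) * phix p
      = \<bar>- w p - k\<bar> * phit p + sgn (- w p - k) * (f (- w p) - f k) * phix p" by simp
  qed
  have e2: "(\<lambda>x. \<bar>(if x < 0 then - a else - b) - (-k)\<bar> * phi (0, x)) = (\<lambda>x. \<bar>(if x < 0 then a else b) - k\<bar> * phi (0, x))"
    by (rule ext) (simp, linarith)
  show "0 \<le> (LINT p:{0<..} \<times> UNIV|lborel. \<bar>- w p - k\<bar> * phit p + sgn (- w p - k) * (f (- w p) - f k) * phix p) +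
          (LINT x|lborel. \<bar>(if x < 0 then a else b) - k\<bar> * phi (0, x))"
    using H unfolding e1 e2 .
qed

lemma conn_left:
  assumes fc: "continuous_on UNIV f"
    and c: "(um \<le> ul \<and> (\<forall>v\<in>{um..ul}. f ul \<le> f v)) \<or> (ul \<le> um \<and> (\<forall>v\<in>{ul..um}. f v \<le> f ul))"
  shows "connects_left f um ul"
  unfolding connects_left_def
proof -
  consider "um = ul" | "um < ul" "\<forall>v\<in>{um..ul}. f ul \<le> f v" | "ul < um" "\<forall>v\<in>{ul..um}. f v \<le> f ul"
    using c by (auto simp: less_le)
  then show "\<exists>w. kruzhkov_solution f (\<lambda>x. if x < 0 then um else ul) w \<and> (AE p in lborel. 0 < fst p \<longrightarrow> 0 < snd p \<longrightarrow> w p = ul)"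
  proof cases
    case 1 then show ?thesis using kruzhkov_const[of f ul] by (intro exI[of _ "\<lambda>p. ul"]) auto
  next
    case 2
    interpret lim_setup um ul f by unfold_locales (use 2 fc in \<open>auto intro: continuous_on_subset\<close>)
    from fan_sol 2(2) show ?thesis by blast
  next
    case 3
    interpret lim_setup "- um" "- ul" "\<lambda>u. - f (- u)"
    proof
      show "- um < - ul" using 3 by simp
      show "continuous_on {- um..- ul} (\<lambda>u. - f (- u))"
        by (intro continuous_intros continuous_on_compose2[OF fc]) auto
    qed
    have "\<forall>v\<in>{- um..- ul}. - f (- (- ul)) \<le> - f (- v)"
    proof
      fix v assume "v \<in> {- um..- ul}"
      then have "- v \<in> {ul..um}" by auto
      then show "- f (- (- ul)) \<le> - f (- v)" using 3(2) by auto
    qed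
    then obtain w where w: "kruzhkov_solution (\<lambda>u. - f (- u)) (\<lambda>x. if x < 0 then - um else - ul) w"
      "AE p in lborel. 0 < fst p \<longrightarrow> 0 < snd p \<longrightarrow> w p = - ul"
      using fan_sol by blast
    have "kruzhkov_solution f (\<lambda>x. if x < 0 then um else ul) (\<lambda>p. - w p)" by (rule kruzhkov_reflect[OF w(1)])
    moreover have "AE p in lborel. 0 < fst p \<longrightarrow> 0 < snd p \<longrightarrow> - w p = ul" using w(2) by auto
    ultimately show ?thesis by blast
  qed
qed

lemma conn_right:
  assumes fc: "continuous_on UNIV f"
    and c: "(ur \<le> up \<and> (\<forall>v\<in>{ur..up}. f ur \<le> f v)) \<or> (up \<le> ur \<and> (\<forall>v\<in>{up..ur}. f v \<le> f ur))"
  shows "connects_right f ur up"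
  unfolding connects_right_def
proof -
  consider "ur = up" | "ur < up" "\<forall>v\<in>{ur..up}. f ur \<le> f v" | "up < ur" "\<forall>v\<in>{up..ur}. f v \<le> f ur"
    using c by (auto simp: less_le)
  then show "\<exists>w. kruzhkov_solution f (\<lambda>x. if x < 0 then ur else up) w \<and> (AE p in lborel. 0 < fst p \<longrightarrow> snd p < 0 \<longrightarrow> w p = ur)"
  proof cases
    case 1 then show ?thesis using kruzhkov_const[of f ur] by (intro exI[of _ "\<lambda>p. ur"]) auto
  next
    case 2
    interpret lim_setup ur up f by unfold_locales (use 2 fc in \<open>auto intro: continuous_on_subset\<close>)
    from fan_sol 2(2) show ?thesis by blast
  next
    case 3
    interpret lim_setup "- ur" "- up" "\<lambda>u. - f (- u)"
    proof
      show "- ur < - up" using 3 by simp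
      show "continuous_on {- ur..- up} (\<lambda>u. - f (- u))"
        by (intro continuous_intros continuous_on_compose2[OF fc]) auto
    qed
    have "\<forall>v\<in>{- ur..- up}. - f (- (- ur)) \<le> - f (- v)"
    proof
      fix v assume "v \<in> {- ur..- up}"
      then have "- v \<in> {up..ur}" by auto
      then show "- f (- (- ur)) \<le> - f (- v)" using 3(2) by auto
    qed
    then obtain w where w: "kruzhkov_solution (\<lambda>u. - f (- u)) (\<lambda>x. if x < 0 then - ur else - up) w"
      "AE p in lborel. 0 < fst p \<longrightarrow> snd p < 0 \<longrightarrow> w p = - ur"
      using fan_sol by blast
    have "kruzhkov_solution f (\<lambda>x. if x < 0 then ur else up) (\<lambda>p. - w p)" by (rule kruzhkov_reflect[OF w(1)])
    moreover have "AE p in lborel. 0 < fst p \<longrightarrow> snd p < 0 \<longrightarrow> - w p = ur" using w(2) by auto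
    ultimately show ?thesis by blast
  qed
qed

locale vflux =
  fixes f :: "real \<Rightarrow> real" and a :: real
  assumes b1: "bij_betw f {..a} {0..}" and am: "antimono_on {..a} f"
    and b2: "bij_betw f {a..} {0..}" and mo: "mono_on {a..} f"
begin

lemma dec: "x \<le> y \<Longrightarrow> y \<le> a \<Longrightarrow> f y \<le> f x"
  using monotone_onD[OF am, of x y] by auto

lemma inc: "a \<le> x \<Longrightarrow> x \<le> y \<Longrightarrow> f x \<le> f y"
  using mono_onD[OF mo, of x y] by auto

lemma img1: "f ` {..a} = {0..}" using b1 by (simp add: bij_betw_def)
lemma img2: "f ` {a..} = {0..}" using b2 by (simp add: bij_betw_def)

lemma nonneg: "f v \<ge> 0"
proof (cases "v \<le> a")
  case True then have "f v \<in> f ` {..a}" by auto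
  then show ?thesis using img1 by auto
next
  case False then have "f v \<in> f ` {a..}" by auto
  then show ?thesis using img2 by auto
qed

lemma fa0: "f a = 0"
proof -
  have "(0::real) \<in> f ` {a..}" using img2 by auto
  then obtain x where "x \<ge> a" "f x = 0" by auto
  then have "f a \<le> 0" using inc[of a x] by simp
  then show ?thesis using nonneg[of a] by simp
qed

lemma zero_iff: "f v = 0 \<Longrightarrow> v = a"
proof -
  assume v: "f v = 0"
  show ?thesis
  proof (cases "v \<le> a")
    case True
    have "inj_on f {..a}" using b1 by (simp add: bij_betw_def)
    then show ?thesis using inj_onD[of f "{..a}" v a] True v fa0 by simp
  next
    case False
    have "inj_on f {a..}" using b2 by (simp add: bij_betw_def)
    then show ?thesis using inj_onD[of f "{a..}" v a] False v fa0 by simp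
  qed
qed

lemma left_pt: "P \<ge> 0 \<Longrightarrow> \<exists>x\<le>a. f x = P"
  using img1 by (metis atLeast_iff atMost_iff imageE)

lemma right_pt: "P \<ge> 0 \<Longrightarrow> \<exists>x\<ge>a. f x = P"
  using img2 by (metis atLeast_iff imageE)

lemma cont: "continuous_on UNIV f"
proof -
  have c1: "continuous_on {a<..} f"
  proof (rule continuous_onI_mono)
    have "f ` {a<..} = {0<..}"
    proof
      show "f ` {a<..} \<subseteq> {0<..}"
      proof
        fix y assume "y \<in> f ` {a<..}"
        then obtain v where v: "v > a" "y = f v" by auto
        then have "f v \<noteq> 0" using zero_iff by fastforce
        then show "y \<in> {0<..}" using nonneg[of v] v by simp
      qed
      show "{0<..} \<subseteq> f ` {a<..}"
      proof
        fix y :: real assume "y \<in> {0<..}"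
        then obtain v where v: "v \<ge> a" "f v = y" using right_pt[of y] by auto
        then have "v \<noteq> a" using fa0 \<open>y \<in> {0<..}\<close> by auto
        then show "y \<in> f ` {a<..}" using v by auto
      qed
    qed
    then show "open (f ` {a<..})" by simp
    show "\<And>x y. x \<in> {a<..} \<Longrightarrow> y \<in> {a<..} \<Longrightarrow> x \<le> y \<Longrightarrow> f x \<le> f y" using inc by auto
  qed
  have c2: "continuous_on {..<a} (\<lambda>v. - f v)"
  proof (rule continuous_onI_mono)
    have "(\<lambda>v. - f v) ` {..<a} = {..<0}"
    proof
      show "(\<lambda>v. - f v) ` {..<a} \<subseteq> {..<0}"
      proof
        fix y assume "y \<in> (\<lambda>v. - f v) ` {..<a}"
        then obtain v where v: "v < a" "y = - f v" by auto
        then have "f v \<noteq> 0" using zero_iff by fastforce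
        then show "y \<in> {..<0}" using nonneg[of v] v by simp
      qed
      show "{..<0} \<subseteq> (\<lambda>v. - f v) ` {..<a}"
      proof
        fix y :: real assume "y \<in> {..<0}"
        then obtain v where v: "v \<le> a" "f v = - y" using left_pt[of "-y"] by auto
        then have "v \<noteq> a" using fa0 \<open>y \<in> {..<0}\<close> by auto
        then show "y \<in> (\<lambda>v. - f v) ` {..<a}" using v by (auto intro!: image_eqI[of _ _ v])
      qed
    qed
    then show "open ((\<lambda>v. - f v) ` {..<a})" by simp
    show "\<And>x y. x \<in> {..<a} \<Longrightarrow> y \<in> {..<a} \<Longrightarrow> x \<le> y \<Longrightarrow> - f x \<le> - f y" using dec by auto
  qed
  have c2': "continuous_on {..<a} f"
    using continuous_on_minus[OF c2] by simp
  have "isCont f x" for x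
  proof -
    consider "x > a" | "x < a" | "x = a" by linarith
    then show ?thesis
    proof cases
      case 1 then show ?thesis using c1 continuous_on_eq_continuous_at[of "{a<..}" f] by auto
    next
      case 2 then show ?thesis using c2' continuous_on_eq_continuous_at[of "{..<a}" f] by auto
    next
      case 3
      show ?thesis unfolding continuous_at_eps_delta
      proof (intro allI impI)
        fix e :: real assume e: "e > 0"
        obtain x1 where x1: "x1 \<ge> a" "f x1 = e / 2" using right_pt[of "e/2"] e by auto
        obtain x0 where x0: "x0 \<le> a" "f x0 = e / 2" using left_pt[of "e/2"] e by auto
        have "x1 \<noteq> a" "x0 \<noteq> a" using x1 x0 fa0 e by auto
        then have x1a: "x1 > a" and x0a: "x0 < a" using x1 x0 by auto
        define d where "d = min (x1 - a) (a - x0)"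
        have d: "d > 0" unfolding d_def using x1a x0a by simp
        have "\<forall>y. dist y x < d \<longrightarrow> dist (f y) (f x) < e"
        proof (intro allI impI)
          fix y assume "dist y x < d"
          then have y: "x0 < y" "y < x1" using 3 unfolding d_def dist_real_def by auto
          have "f y \<le> e / 2"
          proof (cases "y \<le> a")
            case True then show ?thesis using dec[of x0 y] y x0 by simp
          next
            case False then show ?thesis using inc[of y x1] y x1 by simp
          qed
          then show "dist (f y) (f x) < e" using 3 fa0 nonneg[of y] e unfolding dist_real_def by simp
        qed
        then show "\<exists>d>0. \<forall>y. dist y x < d \<longrightarrow> dist (f y) (f x) < e" using d by blast
      qed
    qed
  qed
  then show ?thesis by (simp add: continuous_at_imp_continuous_on)
qed

end

theorem proposition4p9:
  fixes fl fr :: "real \<Rightarrow> real" and ulo uro :: real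
  assumes "bij_betw fl {..ulo} {0..}" and "antimono_on {..ulo} fl"
      and "bij_betw fl {ulo..} {0..}" and "mono_on {ulo..} fl"
      and "bij_betw fr {..uro} {0..}" and "antimono_on {..uro} fr"
      and "bij_betw fr {uro..} {0..}" and "mono_on {uro..} fr"
  shows "complete_germ fl fr {(ul, ur). fl ul = fr ur \<and> sgn (ul - ulo) = sgn (ur - uro)}"
proof -
  interpret L: vflux fl ulo using assms(1-4) by unfold_locales
  interpret R: vflux fr uro using assms(5-8) by unfold_locales
  show ?thesis unfolding complete_germ_def
  proof (intro allI)
    fix um up :: real
    define G where "G = {(ul, ur). fl ul = fr ur \<and> sgn (ul - ulo) = sgn (ur - uro)}"
    have goal: "\<exists>ul ur. (ul, ur) \<in> G \<and> connects_left fl um ul \<and> connects_right fr ur up"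
    proof -
      consider (c1) "um \<le> ulo" "up \<ge> uro" | (c2) "um \<le> ulo" "up < uro" | (c3) "um > ulo" "up \<ge> uro"
        | (c4) "um > ulo" "up < uro" by linarith
      then show ?thesis
      proof cases
        case c1
        have "connects_left fl um ulo"
          by (rule conn_left[OF L.cont]) (use c1 L.fa0 L.nonneg in auto)
        moreover have "connects_right fr uro up"
          by (rule conn_right[OF R.cont]) (use c1 R.fa0 R.nonneg in auto)
        moreover have "(ulo, uro) \<in> G" unfolding G_def using L.fa0 R.fa0 by simp
        ultimately show ?thesis by blast
      next
        case c2
        have P: "fr up > 0" using R.nonneg[of up] R.zero_iff[of up] c2 by force
        obtain ul where ul: "ul \<le> ulo" "fl ul = fr up" using L.left_pt[of "fr up"] P by auto
        have ula: "ul < ulo" using ul L.fa0 P by (cases "ul = ulo") auto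
        have "connects_left fl um ul"
        proof (rule conn_left[OF L.cont])
          show "(um \<le> ul \<and> (\<forall>v\<in>{um..ul}. fl ul \<le> fl v)) \<or> (ul \<le> um \<and> (\<forall>v\<in>{ul..um}. fl v \<le> fl ul))"
          proof (cases "um \<le> ul")
            case True then show ?thesis using L.dec ul(1) by auto
          next
            case False then show ?thesis using L.dec c2(1) by auto
          qed
        qed
        moreover have "connects_right fr up up" by (rule conn_right[OF R.cont]) auto
        moreover have "(ul, up) \<in> G" unfolding G_def using ul ula c2 by simp
        ultimately show ?thesis by blast
      next
        case c3
        have F: "fl um > 0" using L.nonneg[of um] L.zero_iff[of um] c3 by force
        obtain ur where ur: "ur \<ge> uro" "fr ur = fl um" using R.right_pt[of "fl um"] F by auto
        have ura: "ur > uro" using ur R.fa0 F by (cases "ur = uro") auto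
        have "connects_right fr ur up"
        proof (rule conn_right[OF R.cont])
          show "(ur \<le> up \<and> (\<forall>v\<in>{ur..up}. fr ur \<le> fr v)) \<or> (up \<le> ur \<and> (\<forall>v\<in>{up..ur}. fr v \<le> fr ur))"
          proof (cases "ur \<le> up")
            case True then show ?thesis using R.inc ur(1) by auto
          next
            case False then show ?thesis using R.inc c3(2) by auto
          qed
        qed
        moreover have "connects_left fl um um" by (rule conn_left[OF L.cont]) auto
        moreover have "(um, ur) \<in> G" unfolding G_def using ur ura c3 by simp
        ultimately show ?thesis by blast
      next
        case c4
        have F: "fl um > 0" using L.nonneg[of um] L.zero_iff[of um] c4 by force
        have P: "fr up > 0" using R.nonneg[of up] R.zero_iff[of up] c4 by force
        show ?thesis
        proof (cases "fl um \<ge> fr up")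
          case True
          obtain ur where ur: "ur \<ge> uro" "fr ur = fl um" using R.right_pt[of "fl um"] F by auto
          have ura: "ur > uro" using ur R.fa0 F by (cases "ur = uro") auto
          have "connects_right fr ur up"
          proof (rule conn_right[OF R.cont])
            have "\<forall>v\<in>{up..ur}. fr v \<le> fr ur"
            proof
              fix v assume v: "v \<in> {up..ur}"
              show "fr v \<le> fr ur"
              proof (cases "v \<le> uro")
                case True then have "fr v \<le> fr up" using R.dec[of up v] v by simp
                then show ?thesis using ur(2) True \<open>fl um \<ge> fr up\<close> by simp
              next
                case False then show ?thesis using R.inc[of v ur] v by simp
              qed
            qed
            then show "(ur \<le> up \<and> (\<forall>v\<in>{ur..up}. fr ur \<le> fr v)) \<or> (up \<le> ur \<and> (\<forall>v\<in>{up..ur}. fr v \<le> fr ur))"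
              using c4 ura by auto
          qed
          moreover have "connects_left fl um um" by (rule conn_left[OF L.cont]) auto
          moreover have "(um, ur) \<in> G" unfolding G_def using ur ura c4 by simp
          ultimately show ?thesis by blast
        next
          case False
          obtain ul where ul: "ul \<le> ulo" "fl ul = fr up" using L.left_pt[of "fr up"] P by auto
          have ula: "ul < ulo" using ul L.fa0 P by (cases "ul = ulo") auto
          have "connects_left fl um ul"
          proof (rule conn_left[OF L.cont])
            have "\<forall>v\<in>{ul..um}. fl v \<le> fl ul"
            proof
              fix v assume v: "v \<in> {ul..um}"
              show "fl v \<le> fl ul"
              proof (cases "v \<le> ulo")
                case True then show ?thesis using L.dec[of ul v] v by simp
              next
                case False then have "fl v \<le> fl um" using L.inc[of v um] v by simp
                then show ?thesis using ul(2) False \<open>\<not> fl um \<ge> fr up\<close> by simp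
              qed
            qed
            then show "(um \<le> ul \<and> (\<forall>v\<in>{um..ul}. fl ul \<le> fl v)) \<or> (ul \<le> um \<and> (\<forall>v\<in>{ul..um}. fl v \<le> fl ul))"
              using c4 ula by auto
          qed
          moreover have "connects_right fr up up" by (rule conn_right[OF R.cont]) auto
          moreover have "(ul, up) \<in> G" unfolding G_def using ul ula c4 by simp
          ultimately show ?thesis by blast
        qed
      qed
    qed
    then show "\<exists>(ul, ur)\<in>{(ul, ur). fl ul = fr ur \<and> sgn (ul - ulo) = sgn (ur - uro)}. connects_left fl um ul \<and> connects_right fr ur up"
      unfolding G_def by blast
  qed
qed

end
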